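(* Let $f\in\mathcal{B}$, $z\in\{\Re z\ge0\}$ and $r_z(\lambda)=(\lambda+z)^{-1}$ for $\lambda\in\mathbb{C}_+$. Then \[f(z)=f(\infty)+\frac{2}{\pi}\langle r_z,f\rangle_{\mathcal{B}}.\]
   Context: $\mathbb{C}_+=\{\Re z>0\}$. $\mathcal{B}$ is the space of holomorphic $f:\mathbb{C}_+\to\mathbb{C}$ with $\int_0^\infty\sup_{y\in\mathbb{R}}|f'(x+iy)|\,dx<\infty$; such $f$ extend continuously to $\{\Re z\ge0\}$ and $f(\infty):=\lim_{\Re z\to\infty}f(z)$ exists. $\mathcal{E}$ is the space of holomorphic $g$ on $\mathbb{C}_+$ with $\sup_{x>0}x\int_{\mathbb{R}}|g'(x+iy)|\,dy<\infty$ (it contains $r_z$ for $\Re z\ge 0$). For $g\in\mathcal{E},f\in\mathcal{B}$, $\langle g,f\rangle_{\mathcal{B}}:=\int_0^\infty x\int_{\mathbb{R}}g'(x-iy)f'(x+iy)\,dy\,dx$ (absolutely convergent). *)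

theory Defs
  imports "HOL-Analysis.Analysis"
begin

definition C_plus :: "complex set" where
  "C_plus = {z. Re z > 0}"

definition in_B :: "(complex \<Rightarrow> complex) \<Rightarrow> bool" where
  "in_B f \<longleftrightarrow> f holomorphic_on C_plus \<and>
     (\<integral>\<^sup>+ x. indicator {0<..} x *
        (SUP y\<in>(UNIV::real set). ennreal (norm (deriv f (Complex x y)))) \<partial>lborel) < \<infinity>"

definition ext_val :: "(complex \<Rightarrow> complex) \<Rightarrow> complex \<Rightarrow> complex" where
  "ext_val f z = (if Re z > 0 then f z else Lim (at z within C_plus) f)"

definition f_infty :: "(complex \<Rightarrow> complex) \<Rightarrow> complex" where
  "f_infty f = Lim (filtercomap Re at_top) f"

definition pairB :: "(complex \<Rightarrow> complex) \<Rightarrow> (complex \<Rightarrow> complex) \<Rightarrow> complex" where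
  "pairB g f = (LINT x:{0<..}|lborel. of_real x *
      (LINT y|lborel. deriv g (Complex x (- y)) * deriv f (Complex x y)))"

definition resolvent :: "complex \<Rightarrow> complex \<Rightarrow> complex" where
  "resolvent z = (\<lambda>w. inverse (w + z))"

end

theory Submission
  imports Defs "HOL-Complex_Analysis.Complex_Analysis" "HOL-Real_Asymp.Real_Asymp"
begin


lemma open_C_plus: "open C_plus"
  unfolding C_plus_def by (simp add: open_halfspace_Re_gt)

lemma convex_C_plus: "convex C_plus"
  unfolding C_plus_def by (simp add: convex_halfspace_Re_gt)

lemma C_plus_iff[simp]: "w \<in> C_plus \<longleftrightarrow> Re w > 0"
  unfolding C_plus_def by simp

definition psi :: "(complex \<Rightarrow> complex) \<Rightarrow> real \<Rightarrow> ennreal" where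
  "psi f x = indicator {0<..} x * (SUP y\<in>(UNIV::real set). ennreal (norm (deriv f (Complex x y))))"

lemma psi_ge:
  assumes "x > 0" shows "ennreal (norm (deriv f (Complex x y))) \<le> psi f x"
  using assms unfolding psi_def by (auto intro: SUP_upper)

lemma psi_nonpos[simp]: "x \<le> 0 \<Longrightarrow> psi f x = 0"
  unfolding psi_def by simp



lemma vd_line: "((\<lambda>u::real. Complex u y) has_vector_derivative 1) (at u)"
proof -
  have "(\<lambda>u::real. Complex u y) = (\<lambda>u. of_real u + Complex 0 y)"
    by (auto simp: complex_eq_iff)
  moreover have "((\<lambda>u::real. of_real u + Complex 0 y) has_vector_derivative 1) (at u)"
    using has_vector_derivative_real_field[of "\<lambda>w. w + Complex 0 y" 1 u]
    by (auto intro!: derivative_eq_intros)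
  ultimately show ?thesis by simp
qed



definition BB :: "(complex \<Rightarrow> complex) \<Rightarrow> real" where
  "BB f = enn2real (\<integral>\<^sup>+x. psi f x \<partial>lborel)"

definition Mf :: "(complex \<Rightarrow> complex) \<Rightarrow> real" where
  "Mf f = norm (f 1) + 2 * BB f + 1"

lemma norm4: "norm (a + b + c + d) \<le> norm a + norm b + norm c + norm (d::complex)"
  using norm_triangle_ineq[of "a+b+c" d] norm_triangle_ineq[of "a+b" c] norm_triangle_ineq[of a b] by linarith

lemma psi_small:
  assumes "0 < X" "psi f X * ennreal X < ennreal e"
  shows "psi f X \<noteq> \<infinity> \<and> enn2real (psi f X) * X < e"
proof (cases "psi f X")
  case (real p)
  hence "ennreal (p * X) < ennreal e" using assms by (simp add: ennreal_mult)
  hence "p * X < e" using real assms by (simp add: ennreal_less_iff)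
  thus ?thesis using real by simp
next
  case top
  thus ?thesis using assms by (simp add: ennreal_top_mult)
qed







lemma kernel_int:
  fixes a d :: real
  assumes a: "a > 0"
  shows "integrable lborel (\<lambda>y. 1 / (a^2 + (y - d)^2))"
    "(\<integral>\<^sup>+y. ennreal (1 / (a^2 + (y - d)^2)) \<partial>lborel) = ennreal (pi / a)"
proof -
  let ?k = "\<lambda>y::real. 1 / (a^2 + (y - d)^2)"
  let ?F = "\<lambda>y::real. arctan ((y - d) / a) / a"
  have pos: "a^2 + (y - d)^2 > 0" for y using a by (simp add: add_pos_nonneg)
  have D: "(?F has_real_derivative ?k y) (at y)" for y
  proof -
    have "(?F has_real_derivative inverse (1 + ((y - d) / a)^2) / (a * a)) (at y)"
      using a by (auto intro!: derivative_eq_intros)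
    moreover have "1 + ((y - d) / a)^2 = (a^2 + (y - d)^2) / a^2"
      using a by (simp add: field_simps power_divide)
    moreover have "inverse ((a^2 + (y - d)^2) / a^2) / (a * a) = ?k y"
      using a pos[of y] by (simp add: power2_eq_square)
    ultimately show ?thesis by simp
  qed
  have L1: "((?F \<circ> real_of_ereal) \<longlongrightarrow> - (pi/2) / a) (at_right (-\<infinity>))"
    unfolding ereal_tendsto_simps
  proof -
    have "filterlim (\<lambda>y. (y - d) / a) at_bot at_bot" using a by real_asymp
    hence "((\<lambda>y. arctan ((y - d) / a)) \<longlongrightarrow> - (pi/2)) at_bot"
      by (rule filterlim_compose[OF tendsto_arctan_at_bot])
    thus "(?F \<longlongrightarrow> - (pi/2) / a) at_bot" using a by (intro tendsto_intros) auto
  qed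
  have L2: "((?F \<circ> real_of_ereal) \<longlongrightarrow> (pi/2) / a) (at_left \<infinity>)"
    unfolding ereal_tendsto_simps
  proof -
    have "filterlim (\<lambda>y. (y - d) / a) at_top at_top" using a by real_asymp
    hence "((\<lambda>y. arctan ((y - d) / a)) \<longlongrightarrow> (pi/2)) at_top"
      by (rule filterlim_compose[OF tendsto_arctan_at_top])
    thus "(?F \<longlongrightarrow> (pi/2) / a) at_top" using a by (intro tendsto_intros) auto
  qed
  have cont: "isCont ?k y" for y using pos[of y] by (intro continuous_intros) auto
  have nn: "AE y in lborel. -\<infinity> < ereal y \<longrightarrow> ereal y < \<infinity> \<longrightarrow> 0 \<le> ?k y"
    by (intro AE_I2) (use pos in \<open>auto simp: less_imp_le\<close>)
  note FT = interval_integral_FTC_nonneg[of "-\<infinity>" "\<infinity>" ?F ?k, OF _ D cont nn L1 L2]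
  have F1: "set_integrable lborel (einterval (-\<infinity>) \<infinity>) ?k" using FT(1) by simp
  have F2: "(LBINT y=-\<infinity>..\<infinity>. ?k y) = (pi/2) / a - (- (pi/2) / a)" using FT(2) by simp
  have E: "einterval (-\<infinity>) \<infinity> = (UNIV :: real set)" by (auto simp: einterval_def)
  show I: "integrable lborel ?k" using F1 unfolding E set_integrable_def by simp
  have "(LBINT y=-\<infinity>..\<infinity>. ?k y) = integral\<^sup>L lborel ?k"
    unfolding interval_lebesgue_integral_def E set_lebesgue_integral_def by simp
  hence V: "integral\<^sup>L lborel ?k = pi / a" using F2 by simp
  show "(\<integral>\<^sup>+y. ennreal (?k y) \<partial>lborel) = ennreal (pi / a)"
    using nn_integral_eq_integral[OF I] pos V by (simp add: less_imp_le)
qed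

lemma vline:
  fixes G :: "complex \<Rightarrow> complex"
  assumes ab: "a < b" and I: "((\<lambda>y. G (Complex x y)) has_integral I) {a..b}"
  shows "(G has_contour_integral (\<i> * I)) (linepath (Complex x a) (Complex x b))"
proof -
  have m: "b - a > 0" using ab by simp
  have "((\<lambda>t. G (Complex x ((b - a) *\<^sub>R t + a))) has_integral (I /\<^sub>R (b - a) ^ DIM(real)))
          (cbox ((a - a) /\<^sub>R (b - a)) ((b - a) /\<^sub>R (b - a)))"
    using has_integral_affinity_iff[OF m, where f="\<lambda>y. G (Complex x y)" and I=I and c=a and a=a and b=b] I by simp
  hence "((\<lambda>t. G (Complex x ((b - a) * t + a))) has_integral (I /\<^sub>R (b - a))) {0..1}"
    using m by simp
  hence "((\<lambda>t. G (Complex x ((b - a) * t + a)) * (\<i> * of_real (b - a))) has_integral (I /\<^sub>R (b - a)) * (\<i> * of_real (b - a))) {0..1}"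
    by (rule has_integral_mult_left)
  moreover have "(I /\<^sub>R (b - a)) * (\<i> * of_real (b - a)) = \<i> * I"
    using m by (simp add: scaleR_conv_of_real field_simps)
  moreover have "linepath (Complex x a) (Complex x b) t = Complex x ((b - a) * t + a)" for t
    by (simp add: linepath_def complex_eq_iff algebra_simps)
  moreover have "Complex x b - Complex x a = \<i> * of_real (b - a)"
    by (simp add: complex_eq_iff)
  ultimately show ?thesis unfolding has_contour_integral_linepath by simp
qed

lemma frac_bound:
  fixes u v :: complex
  assumes "norm u \<le> B" "c > 0" "c \<le> norm v"
  shows "norm (u / v^2) \<le> B / c^2"
proof -
  have "norm (u / v^2) = norm u / (norm v)^2" by (simp add: norm_divide norm_power)
  also have "\<dots> \<le> B / c^2"
    by (rule frac_le) (use assms in \<open>auto intro: power_mono order_trans[OF norm_ge_zero]\<close>)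
  finally show ?thesis .
qed




lemma Mf_pos: "Mf f > 0"
  unfolding Mf_def BB_def by (simp add: add_nonneg_pos)





lemma deriv_resolvent:
  assumes "w + z \<noteq> 0"
  shows "deriv (resolvent z) w = - inverse ((w + z)^2)"
proof -
  have "(resolvent z has_field_derivative - inverse ((w + z)^2)) (at w)"
    unfolding resolvent_def using assms
    by (auto intro!: derivative_eq_intros simp: power2_eq_square inverse_mult_distrib)
  thus ?thesis by (rule DERIV_imp_deriv)
qed







context
  fixes f :: "complex \<Rightarrow> complex"
  assumes hol: "f holomorphic_on C_plus"
  and fin: "(\<integral>\<^sup>+x. psi f x \<partial>lborel) < \<infinity>"
begin


lemma hol_deriv: "deriv f holomorphic_on C_plus"
  using hol open_C_plus by (rule holomorphic_deriv)

lemma hol_deriv2: "deriv (deriv f) holomorphic_on C_plus"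
  using hol_deriv open_C_plus by (rule holomorphic_deriv)

lemma f_deriv: "Re w > 0 \<Longrightarrow> (f has_field_derivative deriv f w) (at w)"
  using hol open_C_plus
  by (meson C_plus_iff DERIV_deriv_iff_field_differentiable holomorphic_on_imp_differentiable_at)

lemma g_deriv: "Re w > 0 \<Longrightarrow> (deriv f has_field_derivative deriv (deriv f) w) (at w)"
  using hol_deriv open_C_plus
  by (meson C_plus_iff DERIV_deriv_iff_field_differentiable holomorphic_on_imp_differentiable_at)

lemma cont_f: "continuous_on C_plus f"
  using hol holomorphic_on_imp_continuous_on by blast

lemma cont_g: "continuous_on C_plus (deriv f)"
  using hol_deriv holomorphic_on_imp_continuous_on by blast

lemma cont_g2: "continuous_on C_plus (deriv (deriv f))"
  using hol_deriv2 holomorphic_on_imp_continuous_on by blast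

lemma cont_line: "continuous_on {0<..} (\<lambda>x. deriv f (Complex x c))"
proof -
  have "continuous_on {0<..} (\<lambda>x::real. Complex x c)"
    by (intro continuous_intros) 
  moreover have "(\<lambda>x::real. Complex x c) ` {0<..} \<subseteq> C_plus" by auto
  ultimately show ?thesis using continuous_on_compose2[OF cont_g] by blast
qed

lemma cont_vert: "x > 0 \<Longrightarrow> continuous_on UNIV (\<lambda>y. deriv f (Complex x y))"
proof -
  assume x: "x > 0"
  have "continuous_on UNIV (\<lambda>y::real. Complex x y)"
    by (intro continuous_intros) 
  moreover have "(\<lambda>y::real. Complex x y) ` UNIV \<subseteq> C_plus" using x by auto
  ultimately show ?thesis using continuous_on_compose2[OF cont_g] by blast
qed

lemma psi_rat: "psi f x = (SUP q::rat. ennreal (indicator {0<..} x * norm (deriv f (Complex x (of_rat q)))))"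
proof (cases "x > 0")
  case False thus ?thesis unfolding psi_def by simp
next
  case True
  have "(SUP y\<in>(UNIV::real set). ennreal (norm (deriv f (Complex x y)))) =
        (SUP q::rat. ennreal (norm (deriv f (Complex x (of_rat q)))))" (is "?A = ?B")
  proof (rule antisym)
    show "?B \<le> ?A" by (rule SUP_mono) auto
    show "?A \<le> ?B"
    proof (rule SUP_least, rule ccontr)
      fix y assume "\<not> ennreal (norm (deriv f (Complex x y))) \<le> ?B"
      hence lt: "?B < ennreal (norm (deriv f (Complex x y)))" by simp
      have "?B < top" using order.strict_trans[OF lt ennreal_less_top] .
      then obtain r where r: "?B = ennreal r" "r \<ge> 0"
        by (cases ?B) (auto simp: top_unique)
      hence rlt: "r < norm (deriv f (Complex x y))" using lt
        by (metis ennreal_less_iff norm_ge_zero)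
      have "isCont (\<lambda>y. deriv f (Complex x y)) y"
        using cont_vert[OF True] by (simp add: continuous_on_eq_continuous_at)
      hence "isCont (\<lambda>y. norm (deriv f (Complex x y))) y" by (intro continuous_intros)
      hence "\<forall>\<^sub>F y' in at y. dist (norm (deriv f (Complex x y'))) (norm (deriv f (Complex x y))) < norm (deriv f (Complex x y)) - r"
        using rlt unfolding isCont_def tendsto_iff by simp
      then obtain d where d: "d > 0" "\<And>y'. y' \<noteq> y \<Longrightarrow> dist y' y < d \<Longrightarrow> dist (norm (deriv f (Complex x y'))) (norm (deriv f (Complex x y))) < norm (deriv f (Complex x y)) - r"
        unfolding eventually_at by blast
      obtain q where q: "q \<in> \<rat>" "y < q" "q < y + d" using Rats_dense_in_real[of y "y+d"] d by auto
      then obtain q' where q': "q = of_rat q'" by (auto elim: Rats_cases)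
      have "dist q y < d" using q by (simp add: dist_real_def)
      have "q \<noteq> y" using q by simp
      from d(2)[OF this \<open>dist q y < d\<close>] have "r < norm (deriv f (Complex x (of_rat q')))" using q'
        by (simp add: dist_real_def abs_if split: if_splits) 
      hence "ennreal r < ennreal (norm (deriv f (Complex x (of_rat q'))))" using r(2)
        using ennreal_less_iff by auto
      also have "\<dots> \<le> ?B" by (rule SUP_upper) simp
      finally show False using r by simp
    qed
  qed
  thus ?thesis unfolding psi_def using True by simp
qed

lemma psi_measurable[measurable]: "psi f \<in> borel_measurable lborel"
proof -
  have "\<And>q. (\<lambda>x. ennreal (indicator {0<..} x * norm (deriv f (Complex x (of_rat q))))) \<in> borel_measurable lborel"
  proof -
    fix q :: rat
    have "(\<lambda>x. indicator {0<..} x *\<^sub>R deriv f (Complex x (of_rat q))) \<in> borel_measurable borel"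
      by (rule borel_measurable_continuous_on_indicator) (auto intro: cont_line)
    hence "(\<lambda>x. norm (indicator {0<..} x *\<^sub>R deriv f (Complex x (of_rat q)))) \<in> borel_measurable borel"
      by measurable
    hence "(\<lambda>x. ennreal (norm (indicator {0<..} x *\<^sub>R deriv f (Complex x (of_rat q))))) \<in> borel_measurable borel"
      by measurable
    thus "(\<lambda>x. ennreal (indicator {0<..} x * norm (deriv f (Complex x (of_rat q))))) \<in> borel_measurable lborel"
      by (simp add: indicator_def)
  qed
  hence "(\<lambda>x. SUP q::rat. ennreal (indicator {0<..} x * norm (deriv f (Complex x (of_rat q))))) \<in> borel_measurable lborel"
    by (intro borel_measurable_SUP) auto
  thus ?thesis by (subst psi_rat[abs_def]) simp
qed



lemma horiz:
  assumes "0 < s" "s \<le> t"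
  shows "ennreal (norm (f (Complex t y) - f (Complex s y))) \<le> (\<integral>\<^sup>+u. psi f u * indicator {s..t} u \<partial>lborel)"
proof -
  let ?G = "\<lambda>u. deriv f (Complex u y)"
  have "((\<lambda>u. f (Complex u y)) has_vector_derivative ?G u) (at u within {s..t})" if "u \<in> {s..t}" for u
  proof -
    have "Re (Complex u y) > 0" using that assms by simp
    from field_vector_diff_chain_at[OF vd_line f_deriv[OF this]]
    show ?thesis by (simp add: o_def has_vector_derivative_at_within)
  qed
  from fundamental_theorem_of_calculus[OF assms(2) this]
  have I: "(?G has_integral (f (Complex t y) - f (Complex s y))) {s..t}" by simp
  have cont: "continuous_on {s..t} ?G"
    using cont_line[of y] by (rule continuous_on_subset) (use assms in auto)
  have si: "set_integrable lborel {s..t} ?G" by (rule borel_integrable_atLeastAtMost'[OF cont])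
  have "(LINT u:{s..t}|lborel. ?G u) = integral {s..t} ?G"
    by (rule set_borel_integral_eq_integral(2)[OF si])
  also have "\<dots> = f (Complex t y) - f (Complex s y)" using I by (simp add: integral_unique)
  finally have eq: "(LINT u:{s..t}|lborel. ?G u) = f (Complex t y) - f (Complex s y)" .
  have "ennreal (norm (f (Complex t y) - f (Complex s y))) \<le> (\<integral>\<^sup>+u. norm (indicator {s..t} u *\<^sub>R ?G u) \<partial>lborel)"
    using integral_norm_bound_ennreal[OF si[unfolded set_integrable_def]] eq
    unfolding set_lebesgue_integral_def by simp
  also have "\<dots> \<le> (\<integral>\<^sup>+u. psi f u * indicator {s..t} u \<partial>lborel)"
  proof (rule nn_integral_mono)
    fix u
    show "ennreal (norm (indicator {s..t} u *\<^sub>R ?G u)) \<le> psi f u * indicator {s..t} u"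
    proof (cases "u \<in> {s..t}")
      case True
      hence "u > 0" using assms by auto
      thus ?thesis using True psi_ge[of u f y] by simp
    qed simp
  qed
  finally show ?thesis .
qed

lemma log_bound:
  assumes "0 < a" "a \<le> b" "0 \<le> e" "\<And>t. a \<le> t \<Longrightarrow> t \<le> b \<Longrightarrow> ennreal e \<le> psi f t * ennreal t"
  shows "ennreal (e * (ln b - ln a)) \<le> (\<integral>\<^sup>+t. psi f t \<partial>lborel)"
proof -
  have "((\<lambda>t. e / t) has_integral (e * ln b - e * ln a)) {a..b}"
  proof (rule fundamental_theorem_of_calculus[OF assms(2)])
    fix t assume t: "t \<in> {a..b}"
    hence "t > 0" using assms by auto
    thus "((\<lambda>t. e * ln t) has_vector_derivative e / t) (at t within {a..b})"
      by (auto intro!: derivative_eq_intros simp: has_real_derivative_iff_has_vector_derivative[symmetric])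
  qed
  hence "(\<integral>\<^sup>+t. ennreal (e / t) * indicator {a..b} t \<partial>lborel) = ennreal (e * ln b - e * ln a)"
    by (intro nn_integral_has_integral_lebesgue') (use assms in auto)
  hence "ennreal (e * (ln b - ln a)) = (\<integral>\<^sup>+t. ennreal (e / t) * indicator {a..b} t \<partial>lborel)"
    by (simp add: algebra_simps)
  also have "\<dots> \<le> (\<integral>\<^sup>+t. psi f t \<partial>lborel)"
  proof (rule nn_integral_mono)
    fix t
    show "ennreal (e / t) * indicator {a..b} t \<le> psi f t"
    proof (cases "t \<in> {a..b}")
      case True
      hence t: "t > 0" "a \<le> t" "t \<le> b" using assms by auto
      show ?thesis
      proof (cases "psi f t")
        case (real p)
        have "ennreal e \<le> ennreal (p * t)" using assms(4)[OF t(2,3)] real t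
          by (simp add: ennreal_mult)
        hence "e \<le> p * t" using real t by (simp add: ennreal_le_iff)
        hence "e / t \<le> p" using t by (simp add: divide_le_eq)
        thus ?thesis using True real by simp
      qed (simp add: True)
    qed simp
  qed
  finally show ?thesis .
qed

lemma fin_real: "(\<integral>\<^sup>+x. psi f x \<partial>lborel) = ennreal (enn2real (\<integral>\<^sup>+x. psi f x \<partial>lborel))"
  using fin by (simp add: ennreal_enn2real_if less_top)

lemma exists_large:
  assumes "e > 0"
  shows "\<exists>t \<ge> N. psi f t * ennreal t < ennreal e"
proof (rule ccontr)
  assume "\<not> ?thesis"
  hence H: "\<And>t. t \<ge> N \<Longrightarrow> ennreal e \<le> psi f t * ennreal t" by (auto simp: not_less)
  define a where "a = max N 1"
  define B where "B = enn2real (\<integral>\<^sup>+x. psi f x \<partial>lborel)"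
  define M where "M = B / e + 1"
  have B0: "B \<ge> 0" unfolding B_def by simp
  have M0: "M > 0" unfolding M_def using B0 assms by (simp add: add_nonneg_pos)
  have a1: "1 \<le> a" "N \<le> a" unfolding a_def by auto
  have "1 \<le> exp M" using M0 by simp
  hence ea: "a \<le> a * exp M" using mult_left_mono[of 1 "exp M" a] a1 by simp
  have "ennreal (e * (ln (a * exp M) - ln a)) \<le> (\<integral>\<^sup>+t. psi f t \<partial>lborel)"
  proof (rule log_bound)
    fix t assume "a \<le> t" "t \<le> a * exp M"
    thus "ennreal e \<le> psi f t * ennreal t" using H a1 by simp
  qed (use assms a1 ea in auto)
  also have "\<dots> = ennreal B" unfolding B_def by (rule fin_real)
  finally have "e * (ln (a * exp M) - ln a) \<le> B" using B0 by (simp add: ennreal_le_iff)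
  moreover have "ln (a * exp M) - ln a = M" using a_def by (simp add: ln_mult)
  ultimately have "e * M \<le> B" by simp
  moreover have "e * M = B + e" unfolding M_def using assms by (simp add: field_simps)
  ultimately show False using assms by simp
qed

lemma exists_small:
  assumes "e > 0" "d > 0"
  shows "\<exists>t. 0 < t \<and> t < d \<and> psi f t * ennreal t < ennreal e"
proof (rule ccontr)
  assume "\<not> ?thesis"
  hence H: "\<And>t. 0 < t \<Longrightarrow> t < d \<Longrightarrow> ennreal e \<le> psi f t * ennreal t" using not_less by blast
  define B where "B = enn2real (\<integral>\<^sup>+x. psi f x \<partial>lborel)"
  define M where "M = B / e + 1"
  define a where "a = d / 2 * exp (- M)"
  have B0: "B \<ge> 0" unfolding B_def by simp
  have M0: "M > 0" unfolding M_def using B0 assms by (simp add: add_nonneg_pos)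
  have a0: "a > 0" unfolding a_def using assms by simp
  have ab: "a \<le> d / 2" unfolding a_def using assms M0 by (simp add: mult_left_le) 
  have "ennreal (e * (ln (d/2) - ln a)) \<le> (\<integral>\<^sup>+t. psi f t \<partial>lborel)"
  proof (rule log_bound)
    fix t assume "a \<le> t" "t \<le> d/2"
    thus "ennreal e \<le> psi f t * ennreal t" using H a0 assms by simp
  qed (use assms a0 ab in auto)
  also have "\<dots> = ennreal B" unfolding B_def by (rule fin_real)
  finally have "e * (ln (d/2) - ln a) \<le> B" using B0 by (simp add: ennreal_le_iff)
  moreover have "ln (d/2 * exp (- M)) = ln (d/2) + ln (exp (- M))" using assms by (intro ln_mult_pos) auto
  hence "ln (d/2) - ln a = M" unfolding a_def by simp
  ultimately have "e * M \<le> B" by simp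
  moreover have "e * M = B + e" unfolding M_def using assms by (simp add: field_simps)
  ultimately show False using assms by simp
qed

lemma vert:
  assumes "x > 0" "psi f x \<noteq> \<infinity>"
  shows "norm (f (Complex x y) - f (Complex x y')) \<le> enn2real (psi f x) * \<bar>y - y'\<bar>"
proof -
  let ?S = "closed_segment (Complex x y) (Complex x y')"
  have S: "?S = {z. Re z = x \<and> Im z \<in> closed_segment y y'}"
    by (subst closed_segment_same_Re) auto
  have "norm (f (Complex x y) - f (Complex x y')) \<le> enn2real (psi f x) * norm (Complex x y - Complex x y')"
  proof (rule field_differentiable_bound[OF convex_closed_segment])
    fix w assume "w \<in> ?S"
    hence w: "Re w = x" using S by auto
    show "(f has_field_derivative deriv f w) (at w within ?S)"
      using f_deriv[of w] w assms(1) by (simp add: has_field_derivative_at_within)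
    have "ennreal (norm (deriv f (Complex x (Im w)))) \<le> psi f x" by (rule psi_ge[OF assms(1)])
    moreover have "Complex x (Im w) = w" using w by (simp add: complex_eq_iff)
    ultimately have "ennreal (norm (deriv f w)) \<le> psi f x" by simp
    thus "norm (deriv f w) \<le> enn2real (psi f x)" using assms(2)
      by (cases "psi f x") (auto simp: ennreal_le_iff)
  qed auto
  moreover have "norm (Complex x y - Complex x y') = \<bar>y - y'\<bar>"
    by (simp add: cmod_def)
  ultimately show ?thesis by simp
qed



lemma horiz_bound:
  assumes "0 < s" "s \<le> t" "(\<integral>\<^sup>+u. psi f u * indicator A u \<partial>lborel) \<le> ennreal e" "{s..t} \<subseteq> A" "0 \<le> e"
  shows "norm (f (Complex t y) - f (Complex s y)) \<le> e"
proof -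
  have "ennreal (norm (f (Complex t y) - f (Complex s y))) \<le> (\<integral>\<^sup>+u. psi f u * indicator {s..t} u \<partial>lborel)"
    by (rule horiz[OF assms(1,2)])
  also have "\<dots> \<le> (\<integral>\<^sup>+u. psi f u * indicator A u \<partial>lborel)"
    by (rule nn_integral_mono) (use assms(4) in \<open>auto simp: indicator_def\<close>)
  also have "\<dots> \<le> ennreal e" by (rule assms(3))
  finally show ?thesis using assms(5) by (simp add: ennreal_le_iff)
qed

lemma horiz_BB:
  assumes "0 < s" "0 < t"
  shows "norm (f (Complex t y) - f (Complex s y)) \<le> BB f"
proof -
  have I: "(\<integral>\<^sup>+u. psi f u * indicator UNIV u \<partial>lborel) \<le> ennreal (BB f)"
    unfolding BB_def using fin_real by simp
  show ?thesis
  proof (cases "s \<le> t")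
    case True thus ?thesis using horiz_bound[OF assms(1) True I] by (simp add: BB_def)
  next
    case False
    hence "norm (f (Complex s y) - f (Complex t y)) \<le> BB f" using horiz_bound[OF assms(2) _ I] by (simp add: BB_def)
    thus ?thesis by (simp add: norm_minus_commute)
  qed
qed

lemma f_bounded:
  assumes "Re w > 0"
  shows "norm (f w) \<le> Mf f"
proof -
  define x y where "x = Re w" and "y = Im w"
  have w: "w = Complex x y" unfolding x_def y_def by simp
  have e: "1 / (\<bar>y\<bar> + 1) > 0" by (simp add: add_nonneg_pos)
  obtain X where X: "X \<ge> max x 1" "psi f X * ennreal X < ennreal (1 / (\<bar>y\<bar> + 1))"
    using exists_large[OF e] by blast
  have X0: "X \<ge> 1" using X by simp
  from psi_small[OF _ X(2)] X0 have P: "psi f X \<noteq> \<infinity>" "enn2real (psi f X) * X < 1 / (\<bar>y\<bar> + 1)" by auto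
  have "enn2real (psi f X) \<le> enn2real (psi f X) * X" using mult_left_mono[of 1 X "enn2real (psi f X)"] X0 by simp
  hence q1: "enn2real (psi f X) * (\<bar>y\<bar> + 1) \<le> enn2real (psi f X) * X * (\<bar>y\<bar> + 1)"
    by (rule mult_right_mono) simp
  have q2: "enn2real (psi f X) * X * (\<bar>y\<bar> + 1) < 1" using P(2)
    by (simp add: pos_less_divide_eq add_nonneg_pos)
  have p: "enn2real (psi f X) * (\<bar>y\<bar> + 1) \<le> 1" using q1 q2 by linarith
  have "norm (f (Complex X y) - f (Complex X 0)) \<le> enn2real (psi f X) * \<bar>y - 0\<bar>"
    by (rule vert) (use X0 P in auto)
  also have "\<dots> \<le> 1"
  proof -
    have "enn2real (psi f X) * \<bar>y\<bar> + enn2real (psi f X) \<le> 1" using p by (simp add: distrib_left)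
    thus ?thesis using enn2real_nonneg[of "psi f X"] by (simp only: diff_zero)
  qed
  finally have 1: "norm (f (Complex X y) - f (Complex X 0)) \<le> 1" .
  have 2: "norm (f (Complex x y) - f (Complex X y)) \<le> BB f"
    using horiz_BB[of X x y] X0 assms x_def by (simp add: norm_minus_commute)
  have 3: "norm (f (Complex X 0) - f (Complex 1 0)) \<le> BB f"
    using horiz_BB[of 1 X 0] X0 by simp
  have "Complex 1 0 = 1" by (simp add: complex_eq_iff)
  hence "f w = (f (Complex x y) - f (Complex X y)) + (f (Complex X y) - f (Complex X 0)) + (f (Complex X 0) - f (Complex 1 0)) + f 1"
    using w by simp
  hence "norm (f w) \<le> norm (f (Complex x y) - f (Complex X y)) + norm (f (Complex X y) - f (Complex X 0)) + norm (f (Complex X 0) - f (Complex 1 0)) + norm (f 1)"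
    by (simp only: norm4)
  hence "norm (f w) \<le> norm (f 1) + BB f + 1 + BB f" using 1 2 3 by linarith
  thus ?thesis unfolding Mf_def by simp
qed

lemma g_bound:
  assumes "Re w > 0"
  shows "norm (deriv f w) \<le> 2 * Mf f / Re w"
proof -
  define r where "r = Re w / 2"
  have r: "r > 0" using assms r_def by simp
  have sub: "cball w r \<subseteq> C_plus"
  proof
    fix v assume "v \<in> cball w r"
    hence "norm (w - v) \<le> r" by (simp add: dist_norm)
    moreover have "Re w - Re v \<le> norm (w - v)" using abs_Re_le_cmod[of "w - v"] by simp
    ultimately show "v \<in> C_plus" using r_def assms by simp
  qed
  have "norm ((deriv ^^ 1) f w) \<le> fact 1 * Mf f / r ^ 1"
  proof (rule Cauchy_inequality)
    show "f holomorphic_on ball w r" by (rule holomorphic_on_subset[OF hol order_trans[OF ball_subset_cball sub]])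
    show "continuous_on (cball w r) f" by (rule continuous_on_subset[OF cont_f sub])
    show "0 < r" by (rule r)
    fix v assume "norm (w - v) = r"
    hence "v \<in> cball w r" by (simp add: dist_norm)
    hence "Re v > 0" using sub by auto
    thus "norm (f v) \<le> Mf f" by (rule f_bounded)
  qed
  hence "norm (deriv f w) \<le> Mf f / r" by simp
  also have "Mf f / r = 2 * Mf f / Re w" unfolding r_def by simp
  finally show ?thesis .
qed

lemma tail_small:
  assumes "e > 0"
  shows "\<exists>N. (\<integral>\<^sup>+u. psi f u * indicator {N..} u \<partial>lborel) < ennreal e"
proof -
  define F where "F = (\<lambda>i::nat. \<lambda>u. psi f u * indicator {real i..} u)"
  have dec: "decseq F" unfolding F_def
  proof (intro decseq_SucI le_funI)
    fix i u show "psi f u * indicator {real (Suc i)..} u \<le> psi f u * indicator {real i..} u"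
      by (intro mult_left_mono) (auto simp: indicator_def)
  qed
  have meas: "\<And>i. F i \<in> borel_measurable lborel" unfolding F_def using psi_measurable by measurable
  have finI: "\<And>i. (\<integral>\<^sup>+ x. F i x \<partial>lborel) < \<infinity>"
  proof -
    fix i
    have "(\<integral>\<^sup>+ x. F i x \<partial>lborel) \<le> (\<integral>\<^sup>+ x. psi f x \<partial>lborel)"
      unfolding F_def by (rule nn_integral_mono) (auto simp: indicator_def)
    thus "(\<integral>\<^sup>+ x. F i x \<partial>lborel) < \<infinity>" using fin by (simp add: order_le_less_trans)
  qed
  have inf0: "(INF i. F i u) = 0" for u
  proof -
    have "(INF i. F i u) \<le> F (nat \<lceil>u\<rceil> + 1) u" by (rule INF_lower) simp
    also have "F (nat \<lceil>u\<rceil> + 1) u = 0" unfolding F_def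
      by (auto simp: indicator_def) linarith
    finally show ?thesis by simp
  qed
  have "(INF i. integral\<^sup>N lborel (F i)) = (\<integral>\<^sup>+ x. (INF i. F i x) \<partial>lborel)"
    by (rule nn_integral_monotone_convergence_INF_decseq[symmetric, OF dec meas finI])
  also have "\<dots> = 0" using inf0 by simp
  finally have "(INF i. integral\<^sup>N lborel (F i)) < ennreal e" using assms by simp
  then obtain i where "integral\<^sup>N lborel (F i) < ennreal e" by (auto simp: INF_less_iff)
  thus ?thesis unfolding F_def by blast
qed

lemma head_small:
  assumes "e > 0"
  shows "\<exists>d>0. (\<integral>\<^sup>+u. psi f u * indicator {..d} u \<partial>lborel) < ennreal e"
proof -
  define F where "F = (\<lambda>i::nat. \<lambda>u. psi f u * indicator {..1 / real (Suc i)} u)"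
  have dec: "decseq F" unfolding F_def
  proof (intro decseq_SucI le_funI)
    fix i u
    have "1 / real (Suc (Suc i)) \<le> 1 / real (Suc i)" by (intro divide_left_mono) auto
    thus "psi f u * indicator {..1 / real (Suc (Suc i))} u \<le> psi f u * indicator {..1 / real (Suc i)} u"
      by (intro mult_left_mono) (auto simp: indicator_def)
  qed
  have meas: "\<And>i. F i \<in> borel_measurable lborel" unfolding F_def using psi_measurable by measurable
  have finI: "\<And>i. (\<integral>\<^sup>+ x. F i x \<partial>lborel) < \<infinity>"
  proof -
    fix i
    have "(\<integral>\<^sup>+ x. F i x \<partial>lborel) \<le> (\<integral>\<^sup>+ x. psi f x \<partial>lborel)"
      unfolding F_def by (rule nn_integral_mono) (auto simp: indicator_def)
    thus "(\<integral>\<^sup>+ x. F i x \<partial>lborel) < \<infinity>" using fin by (simp add: order_le_less_trans)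
  qed
  have inf0: "(INF i. F i u) = 0" for u
  proof (cases "u > 0")
    case True
    then obtain n where n: "inverse (real (Suc n)) < u" using reals_Archimedean by blast
    have "(INF i. F i u) \<le> F n u" by (rule INF_lower) simp
    also have "F n u = 0" unfolding F_def using n by (auto simp: indicator_def field_simps)
    finally show ?thesis by simp
  next
    case False
    have "(INF i. F i u) \<le> F 0 u" by (rule INF_lower) simp
    also have "F 0 u = 0" unfolding F_def using False by simp
    finally show ?thesis by simp
  qed
  have "(INF i. integral\<^sup>N lborel (F i)) = (\<integral>\<^sup>+ x. (INF i. F i x) \<partial>lborel)"
    by (rule nn_integral_monotone_convergence_INF_decseq[symmetric, OF dec meas finI])
  also have "\<dots> = 0" using inf0 by simp
  finally have "(INF i. integral\<^sup>N lborel (F i)) < ennreal e" using assms by simp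
  then obtain i where "integral\<^sup>N lborel (F i) < ennreal e" by (auto simp: INF_less_iff)
  thus ?thesis unfolding F_def by (intro exI[of _ "1 / real (Suc i)"]) auto
qed



lemma horiz_tail:
  assumes "(\<integral>\<^sup>+u. psi f u * indicator {N..} u \<partial>lborel) \<le> ennreal e" "0 \<le> e"
    "N \<le> s" "N \<le> t" "0 < s" "0 < t"
  shows "norm (f (Complex t y) - f (Complex s y)) \<le> e"
proof (cases "s \<le> t")
  case True thus ?thesis by (intro horiz_bound[OF _ _ assms(1)]) (use assms in auto)
next
  case False
  hence "norm (f (Complex s y) - f (Complex t y)) \<le> e"
    by (intro horiz_bound[OF _ _ assms(1)]) (use assms in auto)
  thus ?thesis by (simp add: norm_minus_commute)
qed

lemma horiz_head:
  assumes "(\<integral>\<^sup>+u. psi f u * indicator {..d} u \<partial>lborel) \<le> ennreal e" "0 \<le> e"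
    "s \<le> d" "t \<le> d" "0 < s" "0 < t"
  shows "norm (f (Complex t y) - f (Complex s y)) \<le> e"
proof (cases "s \<le> t")
  case True thus ?thesis by (intro horiz_bound[OF _ _ assms(1)]) (use assms in auto)
next
  case False
  hence "norm (f (Complex s y) - f (Complex t y)) \<le> e"
    by (intro horiz_bound[OF _ _ assms(1)]) (use assms in auto)
  thus ?thesis by (simp add: norm_minus_commute)
qed

lemma vert_small:
  assumes "x > 0" "e > 0"
  shows "\<exists>X \<ge> x. X \<ge> 1 \<and> norm (f (Complex X y) - f (Complex X y')) \<le> e"
proof -
  have e: "e / (\<bar>y - y'\<bar> + 1) > 0" using assms by (simp add: add_nonneg_pos)
  obtain X where X: "X \<ge> max x 1" "psi f X * ennreal X < ennreal (e / (\<bar>y - y'\<bar> + 1))"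
    using exists_large[OF e] by blast
  have X0: "X \<ge> 1" using X by simp
  from psi_small[OF _ X(2)] X0 have P: "psi f X \<noteq> \<infinity>" "enn2real (psi f X) * X < e / (\<bar>y - y'\<bar> + 1)" by auto
  have "enn2real (psi f X) \<le> enn2real (psi f X) * X" using mult_left_mono[of 1 X "enn2real (psi f X)"] X0 by simp
  hence q1: "enn2real (psi f X) * (\<bar>y - y'\<bar> + 1) \<le> enn2real (psi f X) * X * (\<bar>y - y'\<bar> + 1)"
    by (rule mult_right_mono) simp
  have q2: "enn2real (psi f X) * X * (\<bar>y - y'\<bar> + 1) < e" using P(2)
    by (simp add: pos_less_divide_eq add_nonneg_pos)
  have p: "enn2real (psi f X) * \<bar>y - y'\<bar> + enn2real (psi f X) \<le> e" using q1 q2 by (simp add: distrib_left)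
  have "norm (f (Complex X y) - f (Complex X y')) \<le> enn2real (psi f X) * \<bar>y - y'\<bar>"
    by (rule vert) (use X0 P in auto)
  also have "\<dots> \<le> e" using p enn2real_nonneg[of "psi f X"] by linarith
  finally show ?thesis using X X0 by auto
qed

lemma f_infty_tendsto: "(f \<longlongrightarrow> f_infty f) (filtercomap Re at_top)"
proof -
  define u where "u = (\<lambda>n::nat. f (Complex (real n + 1) 0))"
  have "Cauchy u"
  proof (rule CauchyI)
    fix e :: real assume e: "e > 0"
    obtain N where N: "(\<integral>\<^sup>+u. psi f u * indicator {N..} u \<partial>lborel) < ennreal (e/2)"
      using tail_small[of "e/2"] e by auto
    show "\<exists>M. \<forall>m\<ge>M. \<forall>n\<ge>M. norm (u m - u n) < e"
    proof (intro exI allI impI)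
      fix m n assume "m \<ge> nat \<lceil>N\<rceil>" "n \<ge> nat \<lceil>N\<rceil>"
      hence "N \<le> real m + 1" "N \<le> real n + 1" by linarith+
      hence "norm (u m - u n) \<le> e/2" unfolding u_def
        by (intro horiz_tail[OF less_imp_le[OF N]]) (use e in auto)
      thus "norm (u m - u n) < e" using e by simp
    qed
  qed
  then obtain L where L: "u \<longlonglongrightarrow> L" using Cauchy_convergent_iff convergent_def by blast
  have key: "\<exists>N. \<forall>w. Re w \<ge> N \<longrightarrow> norm (f w - L) \<le> 3 * e" if e: "e > 0" for e
  proof -
    obtain N0 where N0: "(\<integral>\<^sup>+u. psi f u * indicator {N0..} u \<partial>lborel) < ennreal e"
      using tail_small e by auto
    show ?thesis
    proof (intro exI allI impI)
      fix w assume w: "Re w \<ge> max N0 1"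
      define x y where "x = Re w" and "y = Im w"
      have x: "x \<ge> N0" "x \<ge> 1" using w x_def by auto
      obtain X where X: "X \<ge> x" "X \<ge> 1" "norm (f (Complex X y) - f (Complex X 0)) \<le> e"
        using vert_small[of x e y 0] x e by auto
      have a: "norm (f (Complex X y) - f (Complex x y)) \<le> e"
        by (rule horiz_tail[OF less_imp_le[OF N0]]) (use e x X in auto)
      have "eventually (\<lambda>n. norm (u n - f (Complex X 0)) \<le> e) sequentially"
        unfolding eventually_sequentially
      proof (intro exI allI impI)
        fix n assume "n \<ge> nat \<lceil>X\<rceil>"
        hence "X \<le> real n + 1" by linarith
        thus "norm (u n - f (Complex X 0)) \<le> e" unfolding u_def
          by (intro horiz_tail[OF less_imp_le[OF N0]]) (use e x X in auto)
      qed
      moreover have "(\<lambda>n. norm (u n - f (Complex X 0))) \<longlonglongrightarrow> norm (L - f (Complex X 0))"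
        by (intro tendsto_intros L)
      ultimately have c: "norm (L - f (Complex X 0)) \<le> e"
        by (intro tendsto_upperbound) auto
      have "w = Complex x y" unfolding x_def y_def by simp
      have t1: "norm (f (Complex x y) - L) \<le> norm (f (Complex x y) - f (Complex X 0)) + norm (L - f (Complex X 0))"
        using norm_triangle_ineq4[of "f (Complex x y) - f (Complex X 0)" "L - f (Complex X 0)"] by simp
      have t2: "norm (f (Complex x y) - f (Complex X 0)) \<le> norm (f (Complex x y) - f (Complex X y)) + norm (f (Complex X y) - f (Complex X 0))"
        using norm_triangle_ineq[of "f (Complex x y) - f (Complex X y)" "f (Complex X y) - f (Complex X 0)"] by simp
      have "norm (f w - L) \<le> norm (f (Complex X y) - f (Complex x y)) + norm (f (Complex X y) - f (Complex X 0)) + norm (L - f (Complex X 0))"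
        using t1 t2 norm_minus_commute[of "f (Complex x y)" "f (Complex X y)"] \<open>w = Complex x y\<close> by simp
      thus "norm (f w - L) \<le> 3 * e" using a X(3) c by linarith
    qed
  qed
  have lim: "(f \<longlongrightarrow> L) (filtercomap Re at_top)"
  proof (rule tendstoI)
    fix e :: real assume e: "e > 0"
    obtain N where N: "\<forall>w. Re w \<ge> N \<longrightarrow> norm (f w - L) \<le> 3 * (e/4)" using key[of "e/4"] e by auto
    show "\<forall>\<^sub>F w in filtercomap Re at_top. dist (f w) L < e"
      unfolding eventually_filtercomap_at_top_linorder
    proof (intro exI allI impI)
      fix w assume "Re w \<ge> N"
      hence "norm (f w - L) \<le> 3 * (e/4)" using N by blast
      thus "dist (f w) L < e" using e by (simp add: dist_norm)
    qed
  qed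
  have nb: "filtercomap Re at_top \<noteq> bot"
    by (rule filtercomap_neq_bot_surj) (auto simp: surj_Re)
  have "f_infty f = L" unfolding f_infty_def by (rule tendsto_Lim[OF nb lim])
  thus ?thesis using lim by simp
qed



lemma isCont_f: "Re w > 0 \<Longrightarrow> isCont f w"
  using cont_f open_C_plus continuous_on_eq_continuous_at C_plus_iff by blast

lemma bdry:
  assumes z: "Re z = 0"
  shows "\<exists>V. (f \<longlongrightarrow> V) (at z within C_plus)"
proof -
  define y0 where "y0 = Im z"
  have zz: "z = Complex 0 y0" using z y0_def by (simp add: complex_eq_iff)
  define u where "u = (\<lambda>n::nat. f (Complex (1 / (real n + 1)) y0))"
  have small: "1 / (real n + 1) \<le> d" if "n \<ge> nat \<lceil>1/d\<rceil>" "d > 0" for n d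
  proof -
    have "1/d \<le> real n + 1" using that by linarith
    thus ?thesis using that by (simp add: divide_le_eq mult.commute pos_divide_le_eq)
  qed
  have "Cauchy u"
  proof (rule CauchyI)
    fix e :: real assume e: "e > 0"
    obtain d where d: "d > 0" "(\<integral>\<^sup>+u. psi f u * indicator {..d} u \<partial>lborel) < ennreal (e/2)"
      using head_small[of "e/2"] e by auto
    show "\<exists>M. \<forall>m\<ge>M. \<forall>n\<ge>M. norm (u m - u n) < e"
    proof (intro exI allI impI)
      fix m n assume "m \<ge> nat \<lceil>1/d\<rceil>" "n \<ge> nat \<lceil>1/d\<rceil>"
      hence "1 / (real m + 1) \<le> d" "1 / (real n + 1) \<le> d" using small d by auto
      hence "norm (u m - u n) \<le> e/2" unfolding u_def
        by (intro horiz_head[OF less_imp_le[OF d(2)]]) (use e in auto)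
      thus "norm (u m - u n) < e" using e by simp
    qed
  qed
  then obtain V where V: "u \<longlonglongrightarrow> V" using Cauchy_convergent_iff convergent_def by blast
  have key: "\<exists>\<delta>>0. \<forall>w. Re w > 0 \<longrightarrow> dist w z < \<delta> \<longrightarrow> norm (f w - V) < 3 * e" if e: "e > 0" for e
  proof -
    obtain d where d: "d > 0" "(\<integral>\<^sup>+u. psi f u * indicator {..d} u \<partial>lborel) < ennreal e"
      using head_small e by auto
    have "isCont f (Complex d y0)" using d by (intro isCont_f) simp
    then obtain \<delta>2 where \<delta>2: "\<delta>2 > 0" "\<And>v. dist v (Complex d y0) < \<delta>2 \<Longrightarrow> dist (f v) (f (Complex d y0)) < e"
      using e unfolding continuous_at_eps_delta by blast
    have "eventually (\<lambda>n. norm (u n - f (Complex d y0)) \<le> e) sequentially"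
      unfolding eventually_sequentially
    proof (intro exI allI impI)
      fix n assume "n \<ge> nat \<lceil>1/d\<rceil>"
      hence "1 / (real n + 1) \<le> d" using small d by auto
      thus "norm (u n - f (Complex d y0)) \<le> e" unfolding u_def
        by (intro horiz_head[OF less_imp_le[OF d(2)]]) (use e d in auto)
    qed
    moreover have "(\<lambda>n. norm (u n - f (Complex d y0))) \<longlonglongrightarrow> norm (V - f (Complex d y0))"
      by (intro tendsto_intros V)
    ultimately have c: "norm (V - f (Complex d y0)) \<le> e"
      by (intro tendsto_upperbound) auto
    show ?thesis
    proof (intro exI[of _ "min d \<delta>2"] conjI allI impI)
      show "min d \<delta>2 > 0" using d \<delta>2 by simp
      fix w assume w: "Re w > 0" "dist w z < min d \<delta>2"
      define s y where "s = Re w" and "y = Im w"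
      have ww: "w = Complex s y" unfolding s_def y_def by simp
      have "\<bar>Re (w - z)\<bar> \<le> dist w z" "\<bar>Im (w - z)\<bar> \<le> dist w z"
        using abs_Re_le_cmod[of "w - z"] abs_Im_le_cmod[of "w - z"] by (auto simp: dist_norm)
      hence sd: "s < d" and yd: "\<bar>y - y0\<bar> < \<delta>2" using w z unfolding s_def y_def y0_def by auto
      have a: "norm (f (Complex d y) - f (Complex s y)) \<le> e"
        by (rule horiz_head[OF less_imp_le[OF d(2)]]) (use e d sd w s_def in auto)
      have "dist (Complex d y) (Complex d y0) = \<bar>y - y0\<bar>" by (simp add: dist_norm cmod_def)
      hence b: "norm (f (Complex d y) - f (Complex d y0)) < e" using \<delta>2(2)[of "Complex d y"] yd by (simp add: dist_norm)
      have t1: "norm (f (Complex s y) - V) \<le> norm (f (Complex s y) - f (Complex d y0)) + norm (V - f (Complex d y0))"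
        using norm_triangle_ineq4[of "f (Complex s y) - f (Complex d y0)" "V - f (Complex d y0)"] by simp
      have t2: "norm (f (Complex s y) - f (Complex d y0)) \<le> norm (f (Complex s y) - f (Complex d y)) + norm (f (Complex d y) - f (Complex d y0))"
        using norm_triangle_ineq[of "f (Complex s y) - f (Complex d y)" "f (Complex d y) - f (Complex d y0)"] by simp
      have "norm (f w - V) \<le> norm (f (Complex d y) - f (Complex s y)) + norm (f (Complex d y) - f (Complex d y0)) + norm (V - f (Complex d y0))"
        using t1 t2 norm_minus_commute[of "f (Complex s y)" "f (Complex d y)"] ww by simp
      thus "norm (f w - V) < 3 * e" using a b c by linarith
    qed
  qed
  have "(f \<longlongrightarrow> V) (at z within C_plus)"
  proof (rule tendstoI)
    fix e :: real assume e: "e > 0"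
    obtain \<delta> where \<delta>: "\<delta> > 0" "\<forall>w. Re w > 0 \<longrightarrow> dist w z < \<delta> \<longrightarrow> norm (f w - V) < 3 * (e/3)"
      using key[of "e/3"] e by auto
    show "\<forall>\<^sub>F w in at z within C_plus. dist (f w) V < e"
      unfolding eventually_at
    proof (intro exI[of _ \<delta>] conjI ballI impI)
      fix w assume "w \<in> C_plus" "w \<noteq> z \<and> dist w z < \<delta>"
      thus "dist (f w) V < e" using \<delta> by (auto simp: dist_norm)
    qed (rule \<delta>(1))
  qed
  thus ?thesis by blast
qed

lemma ext_lim:
  assumes z: "Re z \<ge> 0"
  shows "((\<lambda>a. f (of_real (2 * a) + z)) \<longlongrightarrow> ext_val f z) (at_right 0)"
proof (cases "Re z > 0")
  case True
  hence e: "ext_val f z = f z" unfolding ext_val_def by simp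
  have "((\<lambda>a::real. of_real (2 * a) + z) \<longlongrightarrow> of_real (2 * 0) + z) (at_right 0)"
    by (intro tendsto_intros)
  hence "((\<lambda>a::real. of_real (2 * a) + z) \<longlongrightarrow> z) (at_right 0)" by simp
  from isCont_tendsto_compose[OF isCont_f[OF True] this] show ?thesis using e by simp
next
  case False
  hence z0: "Re z = 0" using z by simp
  obtain V where V: "(f \<longlongrightarrow> V) (at z within C_plus)" using bdry[OF z0] by blast
  have "z islimpt C_plus" unfolding islimpt_approachable
  proof (intro allI impI)
    fix e :: real assume e: "e > 0"
    show "\<exists>x'\<in>C_plus. x' \<noteq> z \<and> dist x' z < e"
      by (intro bexI[of _ "z + of_real (e/2)"]) (use e z0 in \<open>auto simp: dist_norm\<close>)
  qed
  hence nb: "\<not> trivial_limit (at z within C_plus)" by (simp add: trivial_limit_within)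
  have e: "ext_val f z = V" unfolding ext_val_def using z0 tendsto_Lim[OF nb V] by simp
  have "((\<lambda>a::real. of_real (2 * a) + z) \<longlongrightarrow> of_real (2 * 0) + z) (at_right 0)"
    by (intro tendsto_intros)
  hence t: "((\<lambda>a::real. of_real (2 * a) + z) \<longlongrightarrow> z) (at_right 0)" by simp
  have ev: "eventually (\<lambda>a::real. of_real (2 * a) + z \<in> C_plus \<and> of_real (2 * a) + z \<noteq> z) (at_right 0)"
    using eventually_at_right_less[of 0] by eventually_elim (use z0 in auto)
  have "filterlim (\<lambda>a::real. of_real (2 * a) + z) (at z within C_plus) (at_right 0)"
    unfolding filterlim_at using ev t by blast
  from filterlim_compose[OF V this] show ?thesis using e by simp
qed



lemma rect_cauchy:
  assumes a1: "0 < Re a1" and p: "p \<in> box a1 a3"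
  shows "((\<lambda>w. deriv f w / (w - p)^2) has_contour_integral (2*pi*\<i> * deriv (deriv f) p)) (rectpath a1 a3)"
proof -
  from p have lt: "Re a1 < Re p" "Re p < Re a3" "Im a1 < Im p" "Im p < Im a3"
    by (auto simp: in_box_complex_iff)
  have le: "Re a1 \<le> Re a3" "Im a1 \<le> Im a3" using lt by auto
  have sub: "path_image (rectpath a1 a3) \<subseteq> C_plus - {p}"
  proof
    fix w assume w: "w \<in> path_image (rectpath a1 a3)"
    hence "w \<in> cbox a1 a3" using path_image_rectpath_subset_cbox[OF le] by auto
    hence "Re w \<ge> Re a1" by (auto simp: in_cbox_complex_iff)
    moreover have "w \<noteq> p" using w path_image_rectpath_inter_box[OF le] p by auto
    ultimately show "w \<in> C_plus - {p}" using a1 by auto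
  qed
  have p0: "Re p > 0" using lt a1 by simp
  define S where "S = C_plus - {p}"
  have prim: "((\<lambda>w. deriv (deriv f) w / (w - p) - deriv f w / (w - p)^2) has_contour_integral 0) (rectpath a1 a3)"
  proof (rule Cauchy_theorem_primitive[where f = "\<lambda>w. deriv f w / (w - p)" and S = S])
    fix w assume "w \<in> S"
    hence w: "Re w > 0" "w \<noteq> p" unfolding S_def by auto
    have d1: "((\<lambda>w. w - p) has_field_derivative 1) (at w)"
      by (rule derivative_eq_intros refl | simp)+
    have "((\<lambda>w. deriv f w / (w - p)) has_field_derivative
            (deriv (deriv f) w * (w - p) - deriv f w * 1) / ((w - p) * (w - p))) (at w)"
      by (rule DERIV_divide[OF g_deriv[OF w(1)] d1]) (use w in simp)
    moreover have "(deriv (deriv f) w * (w - p) - deriv f w * 1) / ((w - p) * (w - p))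
        = deriv (deriv f) w / (w - p) - deriv f w / (w - p)^2"
    proof -
      have nz: "w - p \<noteq> 0" using w by simp
      have "(deriv (deriv f) w * (w - p)) / ((w - p) * (w - p)) = deriv (deriv f) w / (w - p)"
        using nz by simp
      thus ?thesis by (simp add: diff_divide_distrib power2_eq_square)
    qed
    ultimately show "((\<lambda>w. deriv f w / (w - p)) has_field_derivative
            (deriv (deriv f) w / (w - p) - deriv f w / (w - p)^2)) (at w within S)"
      by (simp add: has_field_derivative_at_within)
  qed (use sub in \<open>auto simp: S_def\<close>)
  have cif: "((\<lambda>w. deriv (deriv f) w / (w - p)) has_contour_integral
      (2*pi*\<i> * winding_number (rectpath a1 a3) p * deriv (deriv f) p)) (rectpath a1 a3)"
    by (rule Cauchy_integral_formula_convex_simple[OF convex_C_plus hol_deriv2])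
       (use sub p0 interior_open[OF open_C_plus] in auto)
  have wn: "winding_number (rectpath a1 a3) p = 1" by (rule winding_number_rectpath[OF p])
  from has_contour_integral_diff[OF cif prim] wn
  have "((\<lambda>w. deriv (deriv f) w / (w - p) - (deriv (deriv f) w / (w - p) - deriv f w / (w - p)^2))
      has_contour_integral (2*pi*\<i> * deriv (deriv f) p)) (rectpath a1 a3)" by simp
  thus ?thesis by (rule has_contour_integral_eq) (simp only: diff_diff_eq2 add_diff_cancel_left')
qed



lemma cont_Fx:
  assumes "x > 0" "Re p \<noteq> x"
  shows "continuous_on UNIV (\<lambda>y. deriv f (Complex x y) / (Complex x y - p)^2)"
proof -
  have "\<And>y. Complex x y - p \<noteq> 0" using assms(2) by (auto simp: complex_eq_iff)
  hence "\<And>y. (Complex x y - p)^2 \<noteq> 0" by simp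
  thus ?thesis using cont_vert[OF assms(1)] by (intro continuous_intros) auto
qed

lemma seg_bound:
  assumes "Re w \<ge> c" "c > 0" "r > 0" "r \<le> norm (w - p)"
  shows "norm (deriv f w / (w - p)^2) \<le> (2 * Mf f / c) / r^2"
proof (rule frac_bound)
  have "norm (deriv f w) \<le> 2 * Mf f / Re w" using g_bound assms by simp
  also have "\<dots> \<le> 2 * Mf f / c" using assms Mf_pos[of f] by (intro divide_left_mono) auto
  finally show "norm (deriv f w) \<le> 2 * Mf f / c" .
qed (use assms in auto)

lemma edge_est:
  assumes x: "x > 0" and px: "Re p > x" and R: "R \<ge> 2 * (\<bar>Re p\<bar> + \<bar>Im p\<bar> + x + 1)"
  shows "norm (integral {-R..R} (\<lambda>y. deriv f (Complex x y) / (Complex x y - p)^2) + 2 * pi * deriv (deriv f) p)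
          \<le> (16 * Mf f / x + 16 * Mf f) / R"
proof -
  define M where "M = Mf f"
  have M0: "M > 0" unfolding M_def by (rule Mf_pos)
  define F where "F = (\<lambda>w. deriv f w / (w - p)^2)"
  define a1 where "a1 = Complex x (-R)"
  define a2 where "a2 = Complex R (-R)"
  define a3 where "a3 = Complex R R"
  define a4 where "a4 = Complex x R"
  have R1: "R \<ge> 1" "R > Re p" "R > x" "R > \<bar>Im p\<bar>" "R/2 \<le> R - \<bar>Im p\<bar>" "R/2 \<le> R - Re p"
    using R px x by auto
  have pbox: "p \<in> box a1 a3" using R1 px by (auto simp: in_box_complex_iff a1_def a3_def)
  have rc: "(F has_contour_integral (2*pi*\<i>*deriv (deriv f) p)) (rectpath a1 a3)"
    using rect_cauchy[OF _ pbox] x unfolding F_def a1_def by simp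
  have rp: "rectpath a1 a3 = linepath a1 a2 +++ linepath a2 a3 +++ linepath a3 a4 +++ linepath a4 a1"
    unfolding rectpath_def Let_def a1_def a2_def a3_def a4_def by simp
  have int: "F contour_integrable_on rectpath a1 a3" using rc has_contour_integral_integrable by blast
  have v2: "valid_path (linepath a3 a4 +++ linepath a4 a1)" by (intro valid_path_join) auto
  have v1: "valid_path (linepath a2 a3 +++ linepath a3 a4 +++ linepath a4 a1)"
    using v2 by (intro valid_path_join) auto
  have i1: "F contour_integrable_on linepath a1 a2"
    using contour_integrable_joinD1[OF int[unfolded rp]] by simp
  have r1: "F contour_integrable_on (linepath a2 a3 +++ linepath a3 a4 +++ linepath a4 a1)"
    using contour_integrable_joinD2[OF int[unfolded rp] v1] .
  have i2: "F contour_integrable_on linepath a2 a3"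
    using contour_integrable_joinD1[OF r1] by simp
  have r2: "F contour_integrable_on (linepath a3 a4 +++ linepath a4 a1)"
    using contour_integrable_joinD2[OF r1 v2] .
  have i3: "F contour_integrable_on linepath a3 a4"
    using contour_integrable_joinD1[OF r2] by simp
  have i4: "F contour_integrable_on linepath a4 a1"
    using contour_integrable_joinD2[OF r2] by simp
  have "contour_integral (rectpath a1 a3) F =
     contour_integral (linepath a1 a2) F + (contour_integral (linepath a2 a3) F +
       (contour_integral (linepath a3 a4) F + contour_integral (linepath a4 a1) F))"
    unfolding rp using i1 i2 i3 i4 r1 r2 v1 v2 by simp
  moreover have "contour_integral (rectpath a1 a3) F = 2*pi*\<i>*deriv (deriv f) p"
    by (rule contour_integral_unique[OF rc])
  ultimately have sum: "contour_integral (linepath a1 a2) F + contour_integral (linepath a2 a3) F +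
       contour_integral (linepath a3 a4) F + contour_integral (linepath a4 a1) F = 2*pi*\<i>*deriv (deriv f) p"
    by (simp add: add.assoc)
  define I where "I = integral {-R..R} (\<lambda>y. F (Complex x y))"
  have "continuous_on {-R..R} (\<lambda>y. F (Complex x y))"
    using cont_Fx[of x p] x px unfolding F_def by (auto intro: continuous_on_subset)
  hence "((\<lambda>y. F (Complex x y)) has_integral I) {-R..R}"
    unfolding I_def by (intro integrable_integral integrable_continuous_real)
  hence "(F has_contour_integral (\<i> * I)) (linepath a1 a4)"
    unfolding a1_def a4_def by (intro vline) (use R1 in auto)
  hence "(F has_contour_integral (- (\<i> * I))) (linepath a4 a1)"
    by (rule has_contour_integral_reverse_linepath)
  hence c4: "contour_integral (linepath a4 a1) F = - (\<i> * I)" by (rule contour_integral_unique)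
  have b1: "norm (contour_integral (linepath a1 a2) F) \<le> ((2 * M / x) / (R/2)^2) * norm (a2 - a1)"
  proof (rule has_contour_integral_bound_linepath[OF has_contour_integral_integral[OF i1]])
    show "0 \<le> (2 * M / x) / (R/2)^2" using M0 x by simp
    fix w assume "w \<in> closed_segment a1 a2"
    hence w: "Im w = -R" "Re w \<ge> x" unfolding a1_def a2_def using R1
      by (auto simp: closed_segment_same_Im closed_segment_eq_real_ivl)
    have "R/2 \<le> \<bar>Im (w - p)\<bar>" using w R1 by auto
    also have "\<dots> \<le> norm (w - p)" by (rule abs_Im_le_cmod)
    finally show "norm (F w) \<le> (2 * M / x) / (R/2)^2"
      unfolding F_def M_def by (intro seg_bound) (use w x R1 in auto)
  qed
  have b3: "norm (contour_integral (linepath a3 a4) F) \<le> ((2 * M / x) / (R/2)^2) * norm (a4 - a3)"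
  proof (rule has_contour_integral_bound_linepath[OF has_contour_integral_integral[OF i3]])
    show "0 \<le> (2 * M / x) / (R/2)^2" using M0 x by simp
    fix w assume "w \<in> closed_segment a3 a4"
    hence w: "Im w = R" "Re w \<ge> x" unfolding a3_def a4_def using R1
      by (auto simp: closed_segment_same_Im closed_segment_eq_real_ivl)
    have "R/2 \<le> \<bar>Im (w - p)\<bar>" using w R1 by auto
    also have "\<dots> \<le> norm (w - p)" by (rule abs_Im_le_cmod)
    finally show "norm (F w) \<le> (2 * M / x) / (R/2)^2"
      unfolding F_def M_def by (intro seg_bound) (use w x R1 in auto)
  qed
  have b2: "norm (contour_integral (linepath a2 a3) F) \<le> ((2 * M / R) / (R/2)^2) * norm (a3 - a2)"
  proof (rule has_contour_integral_bound_linepath[OF has_contour_integral_integral[OF i2]])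
    show "0 \<le> (2 * M / R) / (R/2)^2" using M0 R1 by simp
    fix w assume "w \<in> closed_segment a2 a3"
    hence w: "Re w = R" unfolding a2_def a3_def using R1
      by (auto simp: closed_segment_same_Re)
    have "R/2 \<le> \<bar>Re (w - p)\<bar>" using w R1 by auto
    also have "\<dots> \<le> norm (w - p)" by (rule abs_Re_le_cmod)
    finally show "norm (F w) \<le> (2 * M / R) / (R/2)^2"
      unfolding F_def M_def by (intro seg_bound) (use w x R1 in auto)
  qed
  have "a3 - a2 = of_real (2 * R) * \<i>" by (simp add: complex_eq_iff a2_def a3_def)
  hence n13: "norm (a3 - a2) = 2 * R" using R1 by (simp add: norm_mult)
  have n1: "norm (a2 - a1) \<le> R" "norm (a4 - a3) \<le> R" "norm (a3 - a2) = 2 * R"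
    unfolding a1_def a2_def a3_def a4_def using R1 x n13 by (auto simp: cmod_def a2_def a3_def)
  have e1: "((2 * M / x) / (R/2)^2) * R = 8 * M / x / R" using R1 x by (simp add: field_simps power2_eq_square)
  have e2: "((2 * M / R) / (R/2)^2) * (2 * R) = 16 * M / R / R" using R1 by (simp add: field_simps power2_eq_square)
  have e3: "16 * M / R / R \<le> 16 * M / R" using R1 M0 by (simp add: divide_le_eq field_simps)
  have B1: "norm (contour_integral (linepath a1 a2) F) \<le> 8 * M / x / R"
    using b1 mult_left_mono[OF n1(1), of "(2 * M / x) / (R/2)^2"] e1 M0 x by simp
  have B3: "norm (contour_integral (linepath a3 a4) F) \<le> 8 * M / x / R"
    using b3 mult_left_mono[OF n1(2), of "(2 * M / x) / (R/2)^2"] e1 M0 x by simp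
  have B2: "norm (contour_integral (linepath a2 a3) F) \<le> 16 * M / R"
    using b2 n1(3) e2 e3 by simp
  have "\<i> * (I + 2 * pi * deriv (deriv f) p) =
     contour_integral (linepath a1 a2) F + contour_integral (linepath a2 a3) F + contour_integral (linepath a3 a4) F"
    using sum c4 by (simp add: algebra_simps)
  hence "norm (I + 2 * pi * deriv (deriv f) p) =
     norm (contour_integral (linepath a1 a2) F + contour_integral (linepath a2 a3) F + contour_integral (linepath a3 a4) F)"
    by (metis mult_1 norm_ii norm_mult)
  also have "\<dots> \<le> norm (contour_integral (linepath a1 a2) F) + norm (contour_integral (linepath a2 a3) F) + norm (contour_integral (linepath a3 a4) F)"
    by (rule order_trans[OF norm_triangle_ineq add_right_mono[OF norm_triangle_ineq]])
  also have "\<dots> \<le> 8 * M / x / R + 16 * M / R + 8 * M / x / R" using B1 B2 B3 by linarith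
  also have "\<dots> = (16 * M / x + 16 * M) / R" using x R1 by (simp add: field_simps)
  finally show ?thesis unfolding I_def F_def M_def .
qed



lemma line_int:
  assumes x: "x > 0" and px: "Re p > x"
  shows "integrable lborel (\<lambda>y. deriv f (Complex x y) / (Complex x y - p)^2)"
    "integral\<^sup>L lborel (\<lambda>y. deriv f (Complex x y) / (Complex x y - p)^2) = - 2 * pi * deriv (deriv f) p"
proof -
  define Fx where "Fx = (\<lambda>y. deriv f (Complex x y) / (Complex x y - p)^2)"
  have contF: "continuous_on UNIV Fx" unfolding Fx_def using cont_Fx x px by simp
  have meas[measurable]: "Fx \<in> borel_measurable lborel"
    using borel_measurable_continuous_onI[OF contF] by simp
  define C where "C = 2 * Mf f / x"
  define a where "a = Re p - x"
  have a0: "a > 0" unfolding a_def using px by simp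
  have kI: "integrable lborel (\<lambda>y. 1 / (a^2 + (y - Im p)^2))" using kernel_int(1)[OF a0] .
  have bnd: "norm (Fx y) \<le> C * (1 / (a^2 + (y - Im p)^2))" for y
  proof -
    have "norm (Complex x y - p)^2 = a^2 + (y - Im p)^2"
      unfolding a_def by (simp add: cmod_power2 power2_commute)
    moreover have "norm (deriv f (Complex x y)) \<le> C" unfolding C_def using g_bound[of "Complex x y"] x by simp
    moreover have "a^2 + (y - Im p)^2 > 0" using a0 by (simp add: add_pos_nonneg)
    ultimately show ?thesis unfolding Fx_def
      by (simp add: norm_divide norm_power divide_right_mono)
  qed
  show I: "integrable lborel (\<lambda>y. deriv f (Complex x y) / (Complex x y - p)^2)"
    unfolding Fx_def[symmetric]
  proof (rule Bochner_Integration.integrable_bound[OF integrable_mult_right[OF kI, of C] meas])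
    show "AE y in lborel. norm (Fx y) \<le> norm (C * (1 / (a^2 + (y - Im p)^2)))"
    proof (rule AE_I2)
      fix y
      have "C * (1 / (a^2 + (y - Im p)^2)) \<ge> 0" unfolding C_def using Mf_pos[of f] x a0
        by (simp add: add_pos_nonneg)
      moreover have "C \<ge> 0" unfolding C_def using Mf_pos[of f] x by simp
      ultimately show "norm (Fx y) \<le> norm (C * (1 / (a^2 + (y - Im p)^2)))" using bnd[of y] by simp
    qed
  qed
  hence IF: "integrable lborel Fx" unfolding Fx_def .
  define R0 where "R0 = 2 * (\<bar>Re p\<bar> + \<bar>Im p\<bar> + x + 1)"
  have R0: "R0 > 0" unfolding R0_def using x by simp
  define s where "s = (\<lambda>n::nat. \<lambda>y. indicator {-(R0 + real n)..R0 + real n} y *\<^sub>R Fx y)"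
  have sint: "integral\<^sup>L lborel (s n) = integral {-(R0 + real n)..R0 + real n} Fx" for n
  proof -
    have "set_integrable lborel {-(R0 + real n)..R0 + real n} Fx"
      by (rule borel_integrable_atLeastAtMost') (rule continuous_on_subset[OF contF], simp)
    from set_borel_integral_eq_integral(2)[OF this] show ?thesis
      unfolding s_def set_lebesgue_integral_def by simp
  qed
  have lim1: "(\<lambda>n. integral\<^sup>L lborel (s n)) \<longlonglongrightarrow> integral\<^sup>L lborel Fx"
  proof (rule integral_dominated_convergence[where w = "\<lambda>y. norm (Fx y)"])
    show "Fx \<in> borel_measurable lborel" by (rule meas)
    show "s n \<in> borel_measurable lborel" for n unfolding s_def by measurable
    show "integrable lborel (\<lambda>y. norm (Fx y))" using IF by (rule integrable_norm)
    show "AE y in lborel. (\<lambda>n. s n y) \<longlonglongrightarrow> Fx y"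
    proof (rule AE_I2, rule tendsto_eventually)
      fix y :: real
      show "\<forall>\<^sub>F n in sequentially. s n y = Fx y"
        unfolding eventually_sequentially
      proof (intro exI allI impI)
        fix n assume "n \<ge> nat \<lceil>\<bar>y\<bar>\<rceil>"
        hence "\<bar>y\<bar> \<le> R0 + real n" using R0 by linarith
        thus "s n y = Fx y" unfolding s_def by (auto simp: indicator_def abs_le_iff)
      qed
    qed
    show "AE y in lborel. norm (s n y) \<le> norm (Fx y)" for n
      by (rule AE_I2) (auto simp: s_def indicator_def)
  qed
  define K where "K = 16 * Mf f / x + 16 * Mf f"
  have lim2: "(\<lambda>n. integral\<^sup>L lborel (s n)) \<longlonglongrightarrow> - 2 * pi * deriv (deriv f) p"
  proof -
    have "(\<lambda>n. integral\<^sup>L lborel (s n) + 2 * pi * deriv (deriv f) p) \<longlonglongrightarrow> 0"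
    proof (rule Lim_null_comparison)
      show "\<forall>\<^sub>F n in sequentially. norm (integral\<^sup>L lborel (s n) + 2 * pi * deriv (deriv f) p) \<le> K / (R0 + real n)"
      proof (rule always_eventually, rule allI)
        fix n
        have "R0 + real n \<ge> 2 * (\<bar>Re p\<bar> + \<bar>Im p\<bar> + x + 1)" unfolding R0_def by simp
        from edge_est[OF x px this] show "norm (integral\<^sup>L lborel (s n) + 2 * pi * deriv (deriv f) p) \<le> K / (R0 + real n)"
          unfolding sint K_def Fx_def by simp
      qed
      show "((\<lambda>n. K / (R0 + real n)) \<longlongrightarrow> 0) sequentially" using R0 by real_asymp
    qed
    hence "(\<lambda>n. (integral\<^sup>L lborel (s n) + 2 * pi * deriv (deriv f) p) - 2 * pi * deriv (deriv f) p) \<longlonglongrightarrow> 0 - 2 * pi * deriv (deriv f) p"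
      by (intro tendsto_intros)
    thus ?thesis by simp
  qed
  from LIMSEQ_unique[OF lim1 lim2]
  show "integral\<^sup>L lborel (\<lambda>y. deriv f (Complex x y) / (Complex x y - p)^2) = - 2 * pi * deriv (deriv f) p"
    unfolding Fx_def .
qed

lemma J_eq:
  assumes x: "x > 0" and z: "Re z \<ge> 0"
  shows "integrable lborel (\<lambda>y. deriv (resolvent z) (Complex x (-y)) * deriv f (Complex x y))"
    "(LINT y|lborel. deriv (resolvent z) (Complex x (-y)) * deriv f (Complex x y)) = 2 * pi * deriv (deriv f) (of_real (2 * x) + z)"
proof -
  define p where "p = of_real (2 * x) + z"
  have px: "Re p > x" unfolding p_def using x z by simp
  have eq: "deriv (resolvent z) (Complex x (-y)) * deriv f (Complex x y) = - (deriv f (Complex x y) / (Complex x y - p)^2)" for y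
  proof -
    have nz: "Complex x (-y) + z \<noteq> 0" using x z by (auto simp: complex_eq_iff)
    have "Complex x (-y) + z = - (Complex x y - p)" unfolding p_def by (simp add: complex_eq_iff)
    hence "(Complex x (-y) + z)^2 = (Complex x y - p)^2" by (simp add: power2_commute)
    thus ?thesis using deriv_resolvent[OF nz] by (simp add: divide_inverse mult.commute)
  qed
  have "integrable lborel (\<lambda>y. - (deriv f (Complex x y) / (Complex x y - p)^2))"
    using line_int(1)[OF x px] by simp
  thus "integrable lborel (\<lambda>y. deriv (resolvent z) (Complex x (-y)) * deriv f (Complex x y))"
    by (subst eq) 
  have "(LINT y|lborel. deriv (resolvent z) (Complex x (-y)) * deriv f (Complex x y)) =
        (LINT y|lborel. - (deriv f (Complex x y) / (Complex x y - p)^2))"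
    by (subst eq) simp
  also have "\<dots> = 2 * pi * deriv (deriv f) p" using line_int(2)[OF x px] by simp
  finally show "(LINT y|lborel. deriv (resolvent z) (Complex x (-y)) * deriv f (Complex x y)) = 2 * pi * deriv (deriv f) (of_real (2 * x) + z)"
    unfolding p_def .
qed

lemma J_bound:
  assumes x: "x > 0" and z: "Re z \<ge> 0"
  shows "ennreal (norm (2 * pi * deriv (deriv f) (of_real (2 * x) + z))) \<le> psi f x * ennreal (pi / (x + Re z))"
proof -
  let ?h = "\<lambda>y. deriv (resolvent z) (Complex x (-y)) * deriv f (Complex x y)"
  define a where "a = x + Re z"
  have a0: "a > 0" unfolding a_def using x z by simp
  have "ennreal (norm (2 * pi * deriv (deriv f) (of_real (2 * x) + z))) = ennreal (norm (LINT y|lborel. ?h y))"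
    using J_eq(2)[OF x z] by simp
  also have "\<dots> \<le> (\<integral>\<^sup>+y. norm (?h y) \<partial>lborel)"
    by (rule integral_norm_bound_ennreal[OF J_eq(1)[OF x z]])
  also have "\<dots> \<le> (\<integral>\<^sup>+y. psi f x * ennreal (1 / (a^2 + (y - Im z)^2)) \<partial>lborel)"
  proof (rule nn_integral_mono)
    fix y
    have nz: "Complex x (-y) + z \<noteq> 0" using x z by (auto simp: complex_eq_iff)
    have n2: "norm (Complex x (-y) + z)^2 = a^2 + (y - Im z)^2"
      unfolding a_def by (simp add: cmod_power2 power2_commute)
    have pos: "a^2 + (y - Im z)^2 > 0" using a0 by (simp add: add_pos_nonneg)
    have "norm (?h y) = norm (deriv f (Complex x y)) * (1 / (a^2 + (y - Im z)^2))"
      using deriv_resolvent[OF nz] n2 by (simp add: norm_mult norm_inverse norm_power divide_inverse mult.commute)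
    hence "ennreal (norm (?h y)) = ennreal (norm (deriv f (Complex x y)) * (1 / (a^2 + (y - Im z)^2)))"
      by (simp only:)
    also have "\<dots> = ennreal (norm (deriv f (Complex x y))) * ennreal (1 / (a^2 + (y - Im z)^2))"
      by (rule ennreal_mult) (use pos in auto)
    also have "\<dots> \<le> psi f x * ennreal (1 / (a^2 + (y - Im z)^2))"
      by (rule mult_right_mono[OF psi_ge[OF x]]) simp
    finally show "ennreal (norm (?h y)) \<le> psi f x * ennreal (1 / (a^2 + (y - Im z)^2))" .
  qed
  also have "\<dots> = psi f x * (\<integral>\<^sup>+y. ennreal (1 / (a^2 + (y - Im z)^2)) \<partial>lborel)"
    by (rule nn_integral_cmult) measurable
  also have "\<dots> = psi f x * ennreal (pi / (x + Re z))"
    using kernel_int(2)[OF a0, of "Im z"] unfolding a_def by simp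
  finally show ?thesis .
qed



lemma h_bound:
  assumes x: "x > 0" and z: "Re z \<ge> 0"
  shows "ennreal (norm (of_real x * deriv (deriv f) (of_real (2 * x) + z))) \<le> psi f x"
proof (cases "psi f x")
  case top thus ?thesis by simp
next
  case (real q)
  define N where "N = norm (deriv (deriv f) (of_real (2 * x) + z))"
  have c: "x + Re z > 0" using x z by simp
  have "ennreal (2 * pi * N) \<le> ennreal q * ennreal (pi / (x + Re z))"
    using J_bound[OF x z] real unfolding N_def by (simp add: norm_mult)
  also have "\<dots> = ennreal (q * (pi / (x + Re z)))" by (rule ennreal_mult[symmetric]) (use real c in auto)
  finally have "2 * pi * N \<le> q * (pi / (x + Re z))" using real c by (simp add: ennreal_le_iff)
  hence B: "2 * pi * N * (x + Re z) \<le> q * pi" using c by (simp add: field_simps)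
  have "pi * (2 * ((x + Re z) * N)) = 2 * pi * N * (x + Re z)" by (simp add: algebra_simps)
  hence "pi * (2 * ((x + Re z) * N)) \<le> pi * q" using B by (simp only: mult.commute[of pi q])
  hence A: "2 * ((x + Re z) * N) \<le> q" using pi_gt_zero by (simp only: mult_le_cancel_left_pos)
  have N0: "N \<ge> 0" unfolding N_def by simp
  have "x * N \<le> (x + Re z) * N" using z N0 by (simp add: mult_right_mono)
  moreover have "0 \<le> (x + Re z) * N" using c N0 by simp
  ultimately have "x * N \<le> q" using A by linarith
  thus ?thesis using real x unfolding N_def by (simp add: norm_mult ennreal_le_iff)
qed

lemma h_cont: "Re z \<ge> 0 \<Longrightarrow> continuous_on {0<..} (\<lambda>x. of_real x * deriv (deriv f) (of_real (2 * x) + z))"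
proof -
  assume z: "Re z \<ge> 0"
  have "continuous_on {0<..} (\<lambda>x::real. of_real (2 * x) + z)" by (intro continuous_intros)
  moreover have "(\<lambda>x::real. of_real (2 * x) + z) ` {0<..} \<subseteq> C_plus" using z by auto
  ultimately have "continuous_on {0<..} (\<lambda>x. deriv (deriv f) (of_real (2 * x) + z))"
    using continuous_on_compose2[OF cont_g2] by blast
  thus ?thesis by (intro continuous_intros)
qed

lemma h_integrable:
  assumes z: "Re z \<ge> 0"
  shows "set_integrable lborel {0<..} (\<lambda>x. of_real x * deriv (deriv f) (of_real (2 * x) + z))"
  unfolding set_integrable_def
proof (rule integrableI_bounded)
  show "(\<lambda>x. indicator {0<..} x *\<^sub>R (of_real x * deriv (deriv f) (of_real (2 * x) + z))) \<in> borel_measurable lborel"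
    using borel_measurable_continuous_on_indicator[OF _ h_cont[OF z]] by simp
  have "(\<integral>\<^sup>+x. ennreal (norm (indicator {0<..} x *\<^sub>R (of_real x * deriv (deriv f) (of_real (2 * x) + z)))) \<partial>lborel)
      \<le> (\<integral>\<^sup>+x. psi f x \<partial>lborel)"
  proof (rule nn_integral_mono)
    fix x :: real
    show "ennreal (norm (indicator {0<..} x *\<^sub>R (of_real x * deriv (deriv f) (of_real (2 * x) + z)))) \<le> psi f x"
      using h_bound[of x z] z by (cases "x > 0") auto
  qed
  thus "(\<integral>\<^sup>+x. ennreal (norm (indicator {0<..} x *\<^sub>R (of_real x * deriv (deriv f) (of_real (2 * x) + z)))) \<partial>lborel) < \<infinity>"
    using fin by (simp add: order_le_less_trans)
qed

lemma ftc_ab: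
  assumes z: "Re z \<ge> 0" and a: "0 < a" "a \<le> b"
  shows "(LINT x:{a..b}|lborel. of_real x * deriv (deriv f) (of_real (2 * x) + z)) =
    (of_real b * deriv f (of_real (2 * b) + z) / 2 - f (of_real (2 * b) + z) / 4) -
    (of_real a * deriv f (of_real (2 * a) + z) / 2 - f (of_real (2 * a) + z) / 4)"
proof -
  define H where "H = (\<lambda>w. w * deriv f (2 * w + z) / 2 - f (2 * w + z) / 4)"
  define H' where "H' = (\<lambda>w. w * deriv (deriv f) (2 * w + z))"
  have dH: "(H has_field_derivative H' w) (at w)" if w: "Re (2 * w + z) > 0" for w
  proof -
    have d2: "((\<lambda>w. 2 * w + z) has_field_derivative 2) (at w)"
      by (auto intro!: derivative_eq_intros)
    have dA: "((\<lambda>w. f (2 * w + z)) has_field_derivative deriv f (2 * w + z) * 2) (at w)"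
      by (rule DERIV_chain2[OF f_deriv[OF w] d2])
    have dB: "((\<lambda>w. deriv f (2 * w + z)) has_field_derivative deriv (deriv f) (2 * w + z) * 2) (at w)"
      by (rule DERIV_chain2[OF g_deriv[OF w] d2])
    have "(H has_field_derivative (w * (deriv (deriv f) (2 * w + z) * 2) + 1 * deriv f (2 * w + z)) / 2
            - (deriv f (2 * w + z) * 2) / 4) (at w)"
      unfolding H_def
      by (intro DERIV_diff DERIV_cdivide DERIV_mult' DERIV_ident dA dB)
    moreover have "(w * (deriv (deriv f) (2 * w + z) * 2) + 1 * deriv f (2 * w + z)) / 2
            - (deriv f (2 * w + z) * 2) / 4 = H' w" unfolding H'_def by (simp add: field_simps)
    ultimately show ?thesis by simp
  qed
  have I: "((\<lambda>x. H' (of_real x)) has_integral (H (of_real b) - H (of_real a))) {a..b}"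
  proof (rule fundamental_theorem_of_calculus[OF a(2)])
    fix x assume "x \<in> {a..b}"
    hence "Re (2 * of_real x + z) > 0" using a z by auto
    from has_vector_derivative_real_field[OF dH[OF this]]
    show "((\<lambda>x. H (of_real x)) has_vector_derivative H' (of_real x)) (at x within {a..b})"
      by (rule has_vector_derivative_at_within)
  qed
  have cont: "continuous_on {a..b} (\<lambda>x. of_real x * deriv (deriv f) (of_real (2 * x) + z))"
    by (rule continuous_on_subset[OF h_cont[OF z]]) (use a in auto)
  have si: "set_integrable lborel {a..b} (\<lambda>x. of_real x * deriv (deriv f) (of_real (2 * x) + z))"
    by (rule borel_integrable_atLeastAtMost'[OF cont])
  have "(LINT x:{a..b}|lborel. of_real x * deriv (deriv f) (of_real (2 * x) + z)) =
      integral {a..b} (\<lambda>x. of_real x * deriv (deriv f) (of_real (2 * x) + z))"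
    by (rule set_borel_integral_eq_integral(2)[OF si])
  also have "\<dots> = H (of_real b) - H (of_real a)" using I unfolding H'_def by (simp add: integral_unique)
  finally show ?thesis unfolding H_def by simp
qed



lemma g_psi:
  assumes "t > 0" "psi f t \<noteq> \<infinity>"
  shows "norm (deriv f (Complex t y)) \<le> enn2real (psi f t)"
proof -
  have "ennreal (norm (deriv f (Complex t y))) \<le> psi f t" by (rule psi_ge[OF assms(1)])
  thus ?thesis using assms(2) by (cases "psi f t") (auto simp: ennreal_le_iff)
qed

lemma inv_lim: "(\<lambda>k. 1 / (real k + 1)) \<longlonglongrightarrow> 0"
  by real_asymp

lemma seq_b:
  assumes z: "Re z \<ge> 0"
  shows "\<exists>b. (\<forall>k. real k + 1 \<le> b k) \<and> ((\<lambda>k. of_real (b k) * deriv f (of_real (2 * b k) + z)) \<longlonglongrightarrow> 0)"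
proof -
  have "\<forall>k. \<exists>t \<ge> 2 * (real k + 1) + Re z. psi f t * ennreal t < ennreal (1 / (real k + 1))"
    using exists_large by simp
  then obtain T where T: "\<And>k. T k \<ge> 2 * (real k + 1) + Re z" "\<And>k. psi f (T k) * ennreal (T k) < ennreal (1 / (real k + 1))"
    by metis
  define b where "b = (\<lambda>k. (T k - Re z) / 2)"
  have bk: "real k + 1 \<le> b k" for k unfolding b_def using T(1)[of k] by simp
  have bnd: "norm (of_real (b k) * deriv f (of_real (2 * b k) + z)) \<le> 1 / (real k + 1)" for k
  proof -
    have "0 \<le> real k" by simp
    have t0: "T k > 0" using T(1)[of k] z \<open>0 \<le> real k\<close> by (smt (verit))
    from psi_small[OF t0 T(2)] have P: "psi f (T k) \<noteq> \<infinity>" "enn2real (psi f (T k)) * T k < 1 / (real k + 1)" by auto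
    have eq: "of_real (2 * b k) + z = Complex (T k) (Im z)" unfolding b_def by (simp add: complex_eq_iff field_simps)
    have b0: "0 \<le> b k" "b k \<le> T k" using bk[of k] T(1)[of k] z unfolding b_def by auto
    have "norm (of_real (b k) * deriv f (of_real (2 * b k) + z)) = b k * norm (deriv f (Complex (T k) (Im z)))"
      using eq b0 by (simp add: norm_mult)
    also have "\<dots> \<le> T k * enn2real (psi f (T k))"
      by (rule mult_mono) (use b0 g_psi[OF t0 P(1)] in auto)
    also have "\<dots> \<le> 1 / (real k + 1)" using P(2) by (simp add: mult.commute)
    finally show ?thesis .
  qed
  have "(\<lambda>k. of_real (b k) * deriv f (of_real (2 * b k) + z)) \<longlonglongrightarrow> 0"
    by (rule Lim_null_comparison[OF always_eventually[OF allI[OF bnd]] inv_lim])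
  thus ?thesis using bk by blast
qed

lemma seq_a:
  assumes z: "Re z \<ge> 0"
  shows "\<exists>a. (\<forall>k. 0 < a k \<and> a k \<le> 1 / (real k + 1)) \<and> ((\<lambda>k. of_real (a k) * deriv f (of_real (2 * a k) + z)) \<longlonglongrightarrow> 0)"
proof (cases "Re z > 0")
  case True
  define a where "a = (\<lambda>k. 1 / (real k + 1))"
  have "isCont (deriv f) z" using cont_g open_C_plus continuous_on_eq_continuous_at True C_plus_iff by blast
  moreover have "(\<lambda>k. of_real (2 * a k) + z) \<longlonglongrightarrow> of_real (2 * 0) + z"
    unfolding a_def by (intro tendsto_intros inv_lim)
  ultimately have "(\<lambda>k. deriv f (of_real (2 * a k) + z)) \<longlonglongrightarrow> deriv f z"
    using isCont_tendsto_compose by fastforce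
  hence "(\<lambda>k. of_real (a k) * deriv f (of_real (2 * a k) + z)) \<longlonglongrightarrow> of_real 0 * deriv f z"
    unfolding a_def by (intro tendsto_intros inv_lim)
  thus ?thesis unfolding a_def by (intro exI[of _ a]) (auto simp: a_def)
next
  case False
  hence z0: "Re z = 0" using z by simp
  have "\<forall>k. \<exists>t. 0 < t \<and> t < 1 / (real k + 1) \<and> psi f t * ennreal t < ennreal (1 / (real k + 1))"
    using exists_small by simp
  then obtain T where T: "\<And>k. 0 < T k" "\<And>k. T k < 1 / (real k + 1)" "\<And>k. psi f (T k) * ennreal (T k) < ennreal (1 / (real k + 1))"
    by metis
  define a where "a = (\<lambda>k. T k / 2)"
  have ak: "0 < a k \<and> a k \<le> 1 / (real k + 1)" for k unfolding a_def using T(1,2)[of k] by simp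
  have bnd: "norm (of_real (a k) * deriv f (of_real (2 * a k) + z)) \<le> 1 / (real k + 1)" for k
  proof -
    from psi_small[OF T(1) T(3)] have P: "psi f (T k) \<noteq> \<infinity>" "enn2real (psi f (T k)) * T k < 1 / (real k + 1)" by auto
    have eq: "of_real (2 * a k) + z = Complex (T k) (Im z)" unfolding a_def using z0 by (simp add: complex_eq_iff)
    have b0: "0 \<le> a k" "a k \<le> T k" using T(1)[of k] unfolding a_def by auto
    have "norm (of_real (a k) * deriv f (of_real (2 * a k) + z)) = a k * norm (deriv f (Complex (T k) (Im z)))"
      using eq b0 by (simp add: norm_mult)
    also have "\<dots> \<le> T k * enn2real (psi f (T k))"
      by (rule mult_mono) (use b0 g_psi[OF T(1) P(1)] in auto)
    also have "\<dots> \<le> 1 / (real k + 1)" using P(2) by (simp add: mult.commute)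
    finally show ?thesis .
  qed
  have "(\<lambda>k. of_real (a k) * deriv f (of_real (2 * a k) + z)) \<longlonglongrightarrow> 0"
    by (rule Lim_null_comparison[OF always_eventually[OF allI[OF bnd]] inv_lim])
  thus ?thesis using ak by blast
qed



lemma main:
  assumes z: "Re z \<ge> 0"
  shows "ext_val f z = f_infty f + of_real (2 / pi) * pairB (resolvent z) f"
proof -
  define h where "h = (\<lambda>x::real. of_real x * deriv (deriv f) (of_real (2 * x) + z))"
  define P where "P = {0::real<..}"
  define V where "V = ext_val f z"
  define L where "L = f_infty f"
  have pB: "pairB (resolvent z) f = 2 * pi * (LINT x:P|lborel. h x)"
  proof -
    have "pairB (resolvent z) f = (LINT x:P|lborel. (2 * pi) * h x)"
      unfolding pairB_def P_def
    proof (rule set_lebesgue_integral_cong)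
      show "\<forall>x. x \<in> {0<..} \<longrightarrow> of_real x * (LINT y|lborel. deriv (resolvent z) (Complex x (- y)) * deriv f (Complex x y)) = (2 * pi) * h x"
        using J_eq(2) z unfolding h_def by (auto simp: algebra_simps)
    qed simp
    thus ?thesis by simp
  qed
  obtain a where a: "\<And>k. 0 < a k" "\<And>k. a k \<le> 1 / (real k + 1)"
    and alim: "(\<lambda>k. of_real (a k) * deriv f (of_real (2 * a k) + z)) \<longlonglongrightarrow> 0"
    using seq_a[OF z] by blast
  obtain b where b: "\<And>k. real k + 1 \<le> b k"
    and blim: "(\<lambda>k. of_real (b k) * deriv f (of_real (2 * b k) + z)) \<longlonglongrightarrow> 0"
    using seq_b[OF z] by blast
  have ab: "a k \<le> b k" for k
  proof -
    have "1 / (real k + 1) \<le> 1" by (simp add: divide_le_eq)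
    thus ?thesis using a(2)[of k] b[of k] by linarith
  qed
  define G where "G = (\<lambda>x::real. of_real x * deriv f (of_real (2 * x) + z) / 2 - f (of_real (2 * x) + z) / 4)"
  have Sk: "integral\<^sup>L lborel (\<lambda>x. indicator {a k..b k} x *\<^sub>R h x) = G (b k) - G (a k)" for k
    using ftc_ab[OF z a(1) ab, of k] unfolding set_lebesgue_integral_def h_def G_def by simp
  have lim1: "(\<lambda>k. integral\<^sup>L lborel (\<lambda>x. indicator {a k..b k} x *\<^sub>R h x)) \<longlonglongrightarrow> integral\<^sup>L lborel (\<lambda>x. indicator P x *\<^sub>R h x)"
  proof (rule integral_dominated_convergence[where w = "\<lambda>x. norm (indicator P x *\<^sub>R h x)"])
    have hc: "continuous_on P h" unfolding P_def h_def by (rule h_cont[OF z])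
    show "(\<lambda>x. indicator P x *\<^sub>R h x) \<in> borel_measurable lborel"
      using borel_measurable_continuous_on_indicator[OF _ hc] unfolding P_def by simp
    show "(\<lambda>x. indicator {a k..b k} x *\<^sub>R h x) \<in> borel_measurable lborel" for k
    proof -
      have "continuous_on {a k..b k} h" by (rule continuous_on_subset[OF hc]) (use a(1)[of k] in \<open>auto simp: P_def\<close>)
      thus ?thesis using borel_measurable_continuous_on_indicator[of "{a k..b k}" h] by simp
    qed
    show "integrable lborel (\<lambda>x. norm (indicator P x *\<^sub>R h x))"
      using h_integrable[OF z] unfolding set_integrable_def P_def h_def by (rule integrable_norm)
    show "AE x in lborel. (\<lambda>k. indicator {a k..b k} x *\<^sub>R h x) \<longlonglongrightarrow> indicator P x *\<^sub>R h x"
    proof (rule AE_I2)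
      fix x :: real
      show "(\<lambda>k. indicator {a k..b k} x *\<^sub>R h x) \<longlonglongrightarrow> indicator P x *\<^sub>R h x"
      proof (cases "x > 0")
        case False
        hence "\<And>k. x \<notin> {a k..b k}" using a(1) by (auto simp: not_less) (meson less_le_trans not_less)
        thus ?thesis using False by (simp add: P_def)
      next
        case True
        obtain n where n: "inverse (real (Suc n)) < x" using reals_Archimedean True by blast
        have "\<forall>\<^sub>F k in sequentially. indicator {a k..b k} x *\<^sub>R h x = indicator P x *\<^sub>R h x"
          unfolding eventually_sequentially
        proof (intro exI[of _ "max n (nat \<lceil>x\<rceil>)"] allI impI)
          fix k assume k: "max n (nat \<lceil>x\<rceil>) \<le> k"
          have "1 / (real k + 1) \<le> inverse (real (Suc n))" using k by (simp add: field_simps)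
          hence "a k \<le> x" using a(2)[of k] n by linarith
          moreover have "x \<le> b k" using b[of k] k by linarith
          ultimately show "indicator {a k..b k} x *\<^sub>R h x = indicator P x *\<^sub>R h x"
            using True by (simp add: P_def)
        qed
        thus ?thesis by (rule tendsto_eventually)
      qed
    qed
    show "AE x in lborel. norm (indicator {a k..b k} x *\<^sub>R h x) \<le> norm (indicator P x *\<^sub>R h x)" for k
    proof (rule AE_I2)
      fix x
      show "norm (indicator {a k..b k} x *\<^sub>R h x) \<le> norm (indicator P x *\<^sub>R h x)"
        using a(1)[of k] by (auto simp: indicator_def P_def)
    qed
  qed
  have alim0: "filterlim a (at_right 0) sequentially"
  proof -
    have "a \<longlonglongrightarrow> 0"
    proof (rule tendsto_sandwich[OF _ _ tendsto_const inv_lim])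
      show "\<forall>\<^sub>F k in sequentially. 0 \<le> a k" using a(1) by (simp add: less_imp_le)
      show "\<forall>\<^sub>F k in sequentially. a k \<le> 1 / (real k + 1)" using a(2) by simp
    qed
    moreover have "\<forall>\<^sub>F k in sequentially. a k \<in> {0<..} \<and> a k \<noteq> 0"
    proof (rule always_eventually, rule allI)
      fix k show "a k \<in> {0<..} \<and> a k \<noteq> 0" using a(1)[of k] by simp
    qed
    ultimately show ?thesis unfolding filterlim_at by blast
  qed
  have fa: "(\<lambda>k. f (of_real (2 * a k) + z)) \<longlonglongrightarrow> V"
    unfolding V_def using filterlim_compose[OF ext_lim[OF z] alim0] by simp
  have fb: "(\<lambda>k. f (of_real (2 * b k) + z)) \<longlonglongrightarrow> L"
  proof -
    have "filterlim (\<lambda>k. Re (of_real (2 * b k) + z)) at_top sequentially"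
    proof (rule filterlim_at_top_mono[OF filterlim_real_sequentially])
      show "\<forall>\<^sub>F k in sequentially. real k \<le> Re (of_real (2 * b k) + z)"
      proof (rule always_eventually, rule allI)
        fix k
        have "real k + 1 \<le> b k" by (rule b)
        moreover have "0 \<le> real k" by simp
        ultimately show "real k \<le> Re (of_real (2 * b k) + z)" using z by simp
      qed
    qed
    hence "filterlim (\<lambda>k. of_real (2 * b k) + z) (filtercomap Re at_top) sequentially"
      unfolding filterlim_filtercomap_iff o_def .
    from filterlim_compose[OF f_infty_tendsto this] show ?thesis unfolding L_def by simp
  qed
  have Ga: "(\<lambda>k. G (a k)) \<longlonglongrightarrow> 0 / 2 - V / 4"
    unfolding G_def by (intro tendsto_intros alim fa) simp_all
  have Gb: "(\<lambda>k. G (b k)) \<longlonglongrightarrow> 0 / 2 - L / 4"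
    unfolding G_def by (intro tendsto_intros blim fb) simp_all
  have lim2: "(\<lambda>k. integral\<^sup>L lborel (\<lambda>x. indicator {a k..b k} x *\<^sub>R h x)) \<longlonglongrightarrow> (0 / 2 - L / 4) - (0 / 2 - V / 4)"
    unfolding Sk by (intro tendsto_intros Ga Gb)
  have I4: "(LINT x:P|lborel. h x) = (V - L) / 4"
    using LIMSEQ_unique[OF lim1 lim2] unfolding set_lebesgue_integral_def by (simp add: field_simps)
  have pBV: "pairB (resolvent z) f = 2 * pi * ((V - L) / 4)" by (simp only: pB I4)
  have e2: "(of_real (2 / pi) :: complex) * (2 * of_real pi * ((V - L) / 4)) = V - L"
  proof -
    have "(pi :: complex) \<noteq> 0" by simp
    thus ?thesis by (simp add: field_simps)
  qed
  have "f_infty f + of_real (2 / pi) * pairB (resolvent z) f = L + of_real (2 / pi) * (2 * of_real pi * ((V - L) / 4))"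
    unfolding pBV L_def by simp
  also have "\<dots> = L + (V - L)" by (simp only: e2)
  also have "\<dots> = V" by simp
  finally show ?thesis unfolding V_def by simp
qed

end

theorem proposition2p20:
  fixes f :: "complex \<Rightarrow> complex" and z :: complex
  assumes "in_B f" and "Re z \<ge> 0"
  shows "ext_val f z = f_infty f + of_real (2 / pi) * pairB (resolvent z) f"
proof -
  have hol: "f holomorphic_on C_plus" using assms(1) unfolding in_B_def by simp
  have fin: "(\<integral>\<^sup>+x. psi f x \<partial>lborel) < \<infinity>" using assms(1) unfolding in_B_def psi_def by simp
  show ?thesis by (rule main[OF hol fin assms(2)])
qed


end
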